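(* Let $\mathcal{H}$ be an infinite-dimensional separable Hilbert space, let $A\in\mathcal{B}(\mathcal{H})$ be self-adjoint and let $\mathbf{c}=\operatorname{diag}(c_1,c_2,\dots)$ with real $c_1\ge c_2\ge\cdots$ be a finite rank operator. Let $\alpha=\sum_{j=1}^\infty c_j\nu_j(A)$ and $\beta=\sum_{j=1}^\infty c_j\lambda_j(A)$. Then $\overline{W_{\mathbf{c}}(A)}=[\alpha,\beta]$.
   Context: For self-adjoint $T\in\mathcal{B}(\mathcal{H})$ and $k\in\mathbb{N}$: $\lambda_k(T)=\sup\{\lambda_k(V^*TV): V:\mathbb{C}^k\to\mathcal{H} \text{ an isometry}\}$ (for a self-adjoint $k\times k$ matrix, $\lambda_k$ is its smallest eigenvalue), and $\nu_k(T)=\inf_{\mathcal{M}\subseteq\mathcal{H},\ \dim\mathcal{M}=k}\ \max_{x\in\mathcal{M},\|x\|=1}\langle Tx,x\rangle$ $(=-\lambda_k(-T))$. The $\mathbf{c}$-numerical range is $W_{\mathbf{c}}(A)=\{\sum_{j\ge1} c_j\langle Ae_j,e_j\rangle: \{e_j\}_{j\ge1}\text{ an orthonormal basis of }\mathcal{H}\}$ (only finitely many $c_j$ are nonzero). *)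

theory Defs
  imports "HOL-Analysis.Analysis"
begin

text \<open>An abstract complex Hilbert space: an additive group 'a with a complex scalar
multiplication sm and an inner product ip (linear in the first argument).\<close>

definition complex_inner_space ::
  "(complex \<Rightarrow> 'a::ab_group_add \<Rightarrow> 'a) \<Rightarrow> ('a \<Rightarrow> 'a \<Rightarrow> complex) \<Rightarrow> bool" where
  "complex_inner_space sm ip \<longleftrightarrow>
     (\<forall>x. sm 1 x = x) \<and>
     (\<forall>a b x. sm a (sm b x) = sm (a * b) x) \<and>
     (\<forall>a x y. sm a (x + y) = sm a x + sm a y) \<and>
     (\<forall>a b x. sm (a + b) x = sm a x + sm b x) \<and>
     (\<forall>x y z. ip (x + y) z = ip x z + ip y z) \<and>
     (\<forall>a x y. ip (sm a x) y = a * ip x y) \<and>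
     (\<forall>x y. ip y x = cnj (ip x y)) \<and>
     (\<forall>x. 0 \<le> Re (ip x x)) \<and>
     (\<forall>x. ip x x = 0 \<longrightarrow> x = 0)"

definition hnorm :: "('a \<Rightarrow> 'a \<Rightarrow> complex) \<Rightarrow> 'a \<Rightarrow> real" where
  "hnorm ip x = sqrt (Re (ip x x))"

definition hilbert_complete :: "('a::ab_group_add \<Rightarrow> 'a \<Rightarrow> complex) \<Rightarrow> bool" where
  "hilbert_complete ip \<longleftrightarrow>
     (\<forall>X::nat \<Rightarrow> 'a. (\<forall>\<epsilon>>0. \<exists>N. \<forall>m\<ge>N. \<forall>n\<ge>N. hnorm ip (X m - X n) < \<epsilon>)
        \<longrightarrow> (\<exists>L. (\<lambda>n. hnorm ip (X n - L)) \<longlonglongrightarrow> 0))"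

definition hilbert_separable :: "('a::ab_group_add \<Rightarrow> 'a \<Rightarrow> complex) \<Rightarrow> bool" where
  "hilbert_separable ip \<longleftrightarrow>
     (\<exists>D. countable D \<and> (\<forall>x. \<forall>\<epsilon>>0. \<exists>d\<in>D. hnorm ip (x - d) < \<epsilon>))"

definition hspan :: "(complex \<Rightarrow> 'a::ab_group_add \<Rightarrow> 'a) \<Rightarrow> 'a set \<Rightarrow> 'a set" where
  "hspan sm S = {y. \<exists>F a. finite F \<and> F \<subseteq> S \<and> y = (\<Sum>s\<in>F. sm (a s) s)}"

definition infinite_dimensional :: "(complex \<Rightarrow> 'a::ab_group_add \<Rightarrow> 'a) \<Rightarrow> bool" where
  "infinite_dimensional sm \<longleftrightarrow> (\<forall>S. finite S \<longrightarrow> hspan sm S \<noteq> UNIV)"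

definition separable_inf_dim_hilbert ::
  "(complex \<Rightarrow> 'a::ab_group_add \<Rightarrow> 'a) \<Rightarrow> ('a \<Rightarrow> 'a \<Rightarrow> complex) \<Rightarrow> bool" where
  "separable_inf_dim_hilbert sm ip \<longleftrightarrow>
     complex_inner_space sm ip \<and> hilbert_complete ip \<and> hilbert_separable ip \<and>
     infinite_dimensional sm"

definition bounded_op ::
  "(complex \<Rightarrow> 'a::ab_group_add \<Rightarrow> 'a) \<Rightarrow> ('a \<Rightarrow> 'a \<Rightarrow> complex) \<Rightarrow> ('a \<Rightarrow> 'a) \<Rightarrow> bool" where
  "bounded_op sm ip T \<longleftrightarrow>
     (\<forall>x y. T (x + y) = T x + T y) \<and> (\<forall>a x. T (sm a x) = sm a (T x)) \<and>
     (\<exists>K. \<forall>x. hnorm ip (T x) \<le> K * hnorm ip x)"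

definition self_adjoint_op ::
  "(complex \<Rightarrow> 'a::ab_group_add \<Rightarrow> 'a) \<Rightarrow> ('a \<Rightarrow> 'a \<Rightarrow> complex) \<Rightarrow> ('a \<Rightarrow> 'a) \<Rightarrow> bool" where
  "self_adjoint_op sm ip T \<longleftrightarrow> bounded_op sm ip T \<and> (\<forall>x y. ip (T x) y = ip x (T y))"

definition orthonormal_on :: "('a \<Rightarrow> 'a \<Rightarrow> complex) \<Rightarrow> nat set \<Rightarrow> (nat \<Rightarrow> 'a) \<Rightarrow> bool" where
  "orthonormal_on ip I e \<longleftrightarrow> (\<forall>i\<in>I. \<forall>j\<in>I. ip (e i) (e j) = (if i = j then 1 else 0))"

text \<open>Orthonormal basis {e_j}_{j>=1}: a maximal orthonormal family.\<close>
definition onb :: "('a::zero \<Rightarrow> 'a \<Rightarrow> complex) \<Rightarrow> (nat \<Rightarrow> 'a) \<Rightarrow> bool" where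
  "onb ip e \<longleftrightarrow> orthonormal_on ip {1..} e \<and> (\<forall>x. (\<forall>j\<ge>1. ip x (e j) = 0) \<longrightarrow> x = 0)"

text \<open>Eigenvalues and smallest eigenvalue of a k x k complex matrix M (entries M i j, 0-based).\<close>
definition mat_eigenvalue :: "nat \<Rightarrow> (nat \<Rightarrow> nat \<Rightarrow> complex) \<Rightarrow> complex \<Rightarrow> bool" where
  "mat_eigenvalue k M \<mu> \<longleftrightarrow>
     (\<exists>x::nat \<Rightarrow> complex. (\<exists>i<k. x i \<noteq> 0) \<and> (\<forall>i<k. (\<Sum>j<k. M i j * x j) = \<mu> * x i))"

definition smallest_eigenvalue :: "nat \<Rightarrow> (nat \<Rightarrow> nat \<Rightarrow> complex) \<Rightarrow> real" where
  "smallest_eigenvalue k M = Min {Re \<mu> | \<mu>. mat_eigenvalue k M \<mu>}"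

text \<open>The compression V^* T V of T by the isometry V : C^k -> H, V(epsilon_j) = v_(j+1),
  i.e. the k x k matrix with (i,j) entry <T v_(j+1), v_(i+1)>.  Isometries C^k -> H
  correspond exactly to orthonormal k-tuples v_1..v_k.\<close>
definition compression :: "('a \<Rightarrow> 'a \<Rightarrow> complex) \<Rightarrow> ('a \<Rightarrow> 'a) \<Rightarrow> (nat \<Rightarrow> 'a) \<Rightarrow> nat \<Rightarrow> nat \<Rightarrow> complex" where
  "compression ip T v = (\<lambda>i j. ip (T (v (Suc j))) (v (Suc i)))"

definition lambda_k :: "('a \<Rightarrow> 'a \<Rightarrow> complex) \<Rightarrow> ('a \<Rightarrow> 'a) \<Rightarrow> nat \<Rightarrow> real" where
  "lambda_k ip T k = Sup {smallest_eigenvalue k (compression ip T v) | v. orthonormal_on ip {1..k} v}"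

text \<open>nu_k(T) = inf over k-dimensional subspaces M of max over unit x in M of <Tx,x>
  (the max is attained, so it is written as Sup).
  A k-dimensional subspace is the span of k linearly independent vectors v_1..v_k.\<close>
definition lin_indep_tuple :: "(complex \<Rightarrow> 'a::ab_group_add \<Rightarrow> 'a) \<Rightarrow> nat \<Rightarrow> (nat \<Rightarrow> 'a) \<Rightarrow> bool" where
  "lin_indep_tuple sm k v \<longleftrightarrow>
     (\<forall>a::nat \<Rightarrow> complex. (\<Sum>j\<in>{1..k}. sm (a j) (v j)) = 0 \<longrightarrow> (\<forall>j\<in>{1..k}. a j = 0))"

definition nu_k :: "(complex \<Rightarrow> 'a::ab_group_add \<Rightarrow> 'a) \<Rightarrow> ('a \<Rightarrow> 'a \<Rightarrow> complex) \<Rightarrow> ('a \<Rightarrow> 'a) \<Rightarrow> nat \<Rightarrow> real" where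
  "nu_k sm ip T k = Inf {Sup {Re (ip (T x) x) | x. x \<in> hspan sm (v ` {1..k}) \<and> hnorm ip x = 1}
                         | v. lin_indep_tuple sm k v}"

definition c_numerical_range :: "('a::zero \<Rightarrow> 'a \<Rightarrow> complex) \<Rightarrow> (nat \<Rightarrow> real) \<Rightarrow> ('a \<Rightarrow> 'a) \<Rightarrow> complex set" where
  "c_numerical_range ip c A =
     {\<Sum>j\<in>{j. 1 \<le> j \<and> c j \<noteq> 0}. of_real (c j) * ip (A (e j)) (e j) | e. onb ip e}"

end

theory Submission
  imports Defs "Jordan_Normal_Form.Spectral_Radius"
begin

lemma mat_eig_bridge:
  "mat_eigenvalue k M \<mu> \<longleftrightarrow> eigenvalue (mat k k (\<lambda>(i,j). M i j)) \<mu>"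
proof
  assume "mat_eigenvalue k M \<mu>"
  then obtain x where x: "\<exists>i<k. x i \<noteq> 0" "\<forall>i<k. (\<Sum>j<k. M i j * x j) = \<mu> * x i"
    unfolding mat_eigenvalue_def by blast
  let ?v = "vec k x"
  have "eigenvector (mat k k (\<lambda>(i,j). M i j)) ?v \<mu>"
    unfolding eigenvector_def
  proof (intro conjI)
    show "?v \<in> carrier_vec (dim_row (mat k k (\<lambda>(i,j). M i j)))" by simp
    show "?v \<noteq> 0\<^sub>v (dim_row (mat k k (\<lambda>(i,j). M i j)))"
      using x(1) by (auto simp: vec_eq_iff)
    show "mat k k (\<lambda>(i,j). M i j) *\<^sub>v ?v = \<mu> \<cdot>\<^sub>v ?v"
      using x(2) by (auto simp: vec_eq_iff scalar_prod_def row_def atLeast0LessThan)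
  qed
  then show "eigenvalue (mat k k (\<lambda>(i,j). M i j)) \<mu>" unfolding eigenvalue_def by blast
next
  assume "eigenvalue (mat k k (\<lambda>(i,j). M i j)) \<mu>"
  then obtain v where v: "eigenvector (mat k k (\<lambda>(i,j). M i j)) v \<mu>" unfolding eigenvalue_def by blast
  hence vc: "v \<in> carrier_vec k" and nz: "v \<noteq> 0\<^sub>v k" and ev: "mat k k (\<lambda>(i,j). M i j) *\<^sub>v v = \<mu> \<cdot>\<^sub>v v"
    unfolding eigenvector_def by auto
  have "\<exists>i<k. v $ i \<noteq> 0" using nz vc by (auto simp: vec_eq_iff)
  moreover have "\<forall>i<k. (\<Sum>j<k. M i j * v $ j) = \<mu> * v $ i"
  proof (intro allI impI)
    fix i assume i: "i < k"
    have "(mat k k (\<lambda>(i,j). M i j) *\<^sub>v v) $ i = (\<mu> \<cdot>\<^sub>v v) $ i" using ev by simp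
    thus "(\<Sum>j<k. M i j * v $ j) = \<mu> * v $ i"
      using i vc by (simp add: scalar_prod_def row_def atLeast0LessThan)
  qed
  ultimately show "mat_eigenvalue k M \<mu>" unfolding mat_eigenvalue_def by blast
qed

lemma mat_eig_finite: "finite {\<mu>. mat_eigenvalue k M \<mu>}"
proof -
  have "{\<mu>. mat_eigenvalue k M \<mu>} = spectrum (mat k k (\<lambda>(i,j). M i j))"
    by (auto simp: spectrum_def mat_eig_bridge)
  thus ?thesis using card_finite_spectrum(1)[of "mat k k (\<lambda>(i,j). M i j)" k] by simp
qed

lemma mat_eig_exists: "k > 0 \<Longrightarrow> \<exists>\<mu>. mat_eigenvalue k M \<mu>"
proof -
  assume "k > 0"
  have "{\<mu>. mat_eigenvalue k M \<mu>} = spectrum (mat k k (\<lambda>(i,j). M i j))"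
    by (auto simp: spectrum_def mat_eig_bridge)
  thus ?thesis using spectrum_non_empty[of "mat k k (\<lambda>(i,j). M i j)" k] \<open>k>0\<close> by auto
qed

locale hs =
  fixes sm :: "complex \<Rightarrow> 'a::ab_group_add \<Rightarrow> 'a" and ip :: "'a \<Rightarrow> 'a \<Rightarrow> complex"
  assumes cis: "complex_inner_space sm ip"
begin

lemmas cis_all = cis[unfolded complex_inner_space_def]

lemma sm_one[simp]: "sm 1 x = x"
  using conjunct1[OF cis_all] by blast
lemma sm_sm[simp]: "sm a (sm b x) = sm (a*b) x"
  using conjunct1[OF conjunct2[OF cis_all]] by blast
lemma sm_add_r: "sm a (x + y) = sm a x + sm a y"
  using conjunct1[OF conjunct2[OF conjunct2[OF cis_all]]] by blast
lemma sm_add_l: "sm (a + b) x = sm a x + sm b x"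
  using conjunct1[OF conjunct2[OF conjunct2[OF conjunct2[OF cis_all]]]] by blast
lemma ip_add_l: "ip (x + y) z = ip x z + ip y z"
  using conjunct1[OF conjunct2[OF conjunct2[OF conjunct2[OF conjunct2[OF cis_all]]]]] by blast
lemma ip_sm_l[simp]: "ip (sm a x) y = a * ip x y"
  using conjunct1[OF conjunct2[OF conjunct2[OF conjunct2[OF conjunct2[OF conjunct2[OF cis_all]]]]]] by blast
lemma ip_cnj: "ip y x = cnj (ip x y)"
  using conjunct1[OF conjunct2[OF conjunct2[OF conjunct2[OF conjunct2[OF conjunct2[OF conjunct2[OF cis_all]]]]]]] by blast
lemma ip_pos: "0 \<le> Re (ip x x)"
  using conjunct1[OF conjunct2[OF conjunct2[OF conjunct2[OF conjunct2[OF conjunct2[OF conjunct2[OF conjunct2[OF cis_all]]]]]]]] by blast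
lemma ip_eq0: "ip x x = 0 \<Longrightarrow> x = 0"
  using conjunct2[OF conjunct2[OF conjunct2[OF conjunct2[OF conjunct2[OF conjunct2[OF conjunct2[OF conjunct2[OF cis_all]]]]]]]] by blast

lemma sm_zero_l[simp]: "sm 0 x = 0"
proof -
  have "sm (0+0) x = sm 0 x + sm 0 x" by (rule sm_add_l)
  thus ?thesis by simp
qed

lemma sm_zero_r[simp]: "sm a 0 = 0"
proof -
  have "sm a (0+0) = sm a 0 + sm a 0" by (rule sm_add_r)
  thus ?thesis by simp
qed

lemma sm_minus_l: "sm (-a) x = - sm a x"
proof -
  have "sm (-a + a) x = sm (-a) x + sm a x" by (rule sm_add_l)
  thus ?thesis by (simp add: eq_neg_iff_add_eq_0)
qed

lemma sm_minus_r: "sm a (-x) = - sm a x"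
proof -
  have "sm a (-x + x) = sm a (-x) + sm a x" by (rule sm_add_r)
  thus ?thesis by (simp add: eq_neg_iff_add_eq_0)
qed

lemma sm_diff_r: "sm a (x - y) = sm a x - sm a y"
  by (metis diff_conv_add_uminus sm_add_r sm_minus_r)

lemma sm_diff_l: "sm (a - b) x = sm a x - sm b x"
  by (metis diff_conv_add_uminus sm_add_l sm_minus_l)

lemma sm_sum_r: "sm a (\<Sum>i\<in>F. f i) = (\<Sum>i\<in>F. sm a (f i))"
  by (induction F rule: infinite_finite_induct) (auto simp: sm_add_r)

lemma sm_sum_l: "sm (\<Sum>i\<in>F. f i) x = (\<Sum>i\<in>F. sm (f i) x)"
  by (induction F rule: infinite_finite_induct) (auto simp: sm_add_l)

lemma ip_add_r: "ip x (y + z) = ip x y + ip x z"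
  by (metis ip_cnj ip_add_l complex_cnj_add)

lemma ip_sm_r[simp]: "ip x (sm a y) = cnj a * ip x y"
  by (metis ip_cnj ip_sm_l complex_cnj_mult)

lemma ip_zero_l[simp]: "ip 0 x = 0"
  using ip_sm_l[of 0 0 x] by simp

lemma ip_zero_r[simp]: "ip x 0 = 0"
  using ip_sm_r[of x 0 0] by simp

lemma ip_minus_l: "ip (- x) y = - ip x y"
  using ip_sm_l[of "-1" x y] sm_minus_l[of 1 x] by simp

lemma ip_minus_r: "ip x (- y) = - ip x y"
  using ip_sm_r[of x "-1" y] sm_minus_l[of 1 y] by simp

lemma ip_diff_l: "ip (x - y) z = ip x z - ip y z"
  by (metis diff_conv_add_uminus ip_add_l ip_minus_l)

lemma ip_diff_r: "ip x (y - z) = ip x y - ip x z"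
  by (metis diff_conv_add_uminus ip_add_r ip_minus_r)

lemma ip_sum_l: "ip (\<Sum>i\<in>F. f i) y = (\<Sum>i\<in>F. ip (f i) y)"
  by (induction F rule: infinite_finite_induct) (auto simp: ip_add_l)

lemma ip_sum_r: "ip y (\<Sum>i\<in>F. f i) = (\<Sum>i\<in>F. ip y (f i))"
  by (induction F rule: infinite_finite_induct) (auto simp: ip_add_r)

lemmas ip_lin = ip_add_l ip_add_r ip_diff_l ip_diff_r ip_minus_l ip_minus_r ip_sum_l ip_sum_r
lemmas sm_lin = sm_add_l sm_add_r sm_diff_l sm_diff_r sm_minus_l sm_minus_r

lemma ip_self_real: "ip x x = complex_of_real (Re (ip x x))"
proof -
  have "cnj (ip x x) = ip x x" using ip_cnj[of x x] by (rule sym)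
  from arg_cong[OF this, of Im] have "Im (ip x x) = 0" by simp
  thus ?thesis by (simp add: complex_eq_iff)
qed

lemma ip_self_Im[simp]: "Im (ip x x) = 0"
  using ip_self_real[of x] by (metis Im_complex_of_real)

lemma ip_self_eq0_iff[simp]: "ip x x = 0 \<longleftrightarrow> x = 0"
  using ip_eq0 by auto

definition n2 :: "'a \<Rightarrow> real" where "n2 x = Re (ip x x)"

lemma n2_nonneg[simp]: "0 \<le> n2 x" unfolding n2_def by (rule ip_pos)

lemma n2_eq0_iff[simp]: "n2 x = 0 \<longleftrightarrow> x = 0"
  unfolding n2_def by (metis complex_eq_iff ip_self_Im ip_self_eq0_iff zero_complex.simps)

lemma n2_pos: "x \<noteq> 0 \<Longrightarrow> 0 < n2 x"
  using n2_nonneg n2_eq0_iff by (metis less_eq_real_def)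

lemma ip_self_n2: "ip x x = complex_of_real (n2 x)"
  unfolding n2_def by (rule ip_self_real)

lemma hnorm_n2: "hnorm ip x = sqrt (n2 x)" unfolding hnorm_def n2_def ..

lemma mult_cnj_cmod2: "a * cnj a = complex_of_real ((cmod a)^2)"
  by (rule complex_norm_square[symmetric])

lemma n2_sm: "n2 (sm a x) = (cmod a)^2 * n2 x"
proof -
  have "ip (sm a x) (sm a x) = (a * cnj a) * ip x x" by (simp add: ac_simps)
  also have "a * cnj a = complex_of_real ((cmod a)^2)" by (rule complex_norm_square[symmetric])
  finally show ?thesis unfolding n2_def by (simp add: ip_self_n2)
qed

lemma cauchy_schwarz: "(cmod (ip x y))^2 \<le> n2 x * n2 y"
proof (cases "y = 0")
  case True thus ?thesis by simp
next
  case False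
  define r where "r = n2 y"
  define a where "a = ip x y"
  define v where "v = sm (of_real r) x - sm a y"
  have r: "r > 0" using False n2_pos r_def by simp
  have "ip v v
      = of_real r * of_real r * ip x x - of_real r * cnj a * ip x y - a * of_real r * ip y x + a * cnj a * ip y y"
    unfolding v_def by (simp add: ip_lin algebra_simps)
  also have "... = of_real r * (of_real r * ip x x - a * cnj a)"
    using ip_cnj[of x y] by (simp add: a_def r_def ip_self_n2 algebra_simps)
  also have "... = of_real (r * (r * n2 x - (cmod a)^2))"
    by (simp add: ip_self_n2 mult_cnj_cmod2 del: of_real_power)
  finally have "n2 v = r * (r * n2 x - (cmod a)^2)" unfolding n2_def by simp
  hence "0 \<le> r * (r * n2 x - (cmod a)^2)" using n2_nonneg[of v] by simp
  hence "0 \<le> r * n2 x - (cmod a)^2" using r by (simp add: zero_le_mult_iff)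
  thus ?thesis by (simp add: a_def r_def mult.commute)
qed

end

lemma lin_sys:
  fixes M :: "nat \<Rightarrow> 'i \<Rightarrow> complex"
  assumes "finite I" "p < card I"
  shows "\<exists>a. (\<exists>i\<in>I. a i \<noteq> 0) \<and> (\<forall>l\<in>{1..p}. (\<Sum>i\<in>I. M l i * a i) = 0)"
  using assms
proof (induction p arbitrary: I M)
  case 0
  then obtain i where "i \<in> I" by (metis card.empty card_gt_0_iff ex_in_conv)
  thus ?case by (rule_tac x="\<lambda>_. 1" in exI) auto
next
  case (Suc p)
  show ?case
  proof (cases "\<forall>i\<in>I. M (Suc p) i = 0")
    case True
    from Suc.IH[of I M] Suc.prems obtain a where a: "\<exists>i\<in>I. a i \<noteq> 0" "\<forall>l\<in>{1..p}. (\<Sum>i\<in>I. M l i * a i) = 0"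
      by auto
    have "\<forall>l\<in>{1..Suc p}. (\<Sum>i\<in>I. M l i * a i) = 0"
    proof
      fix l assume "l \<in> {1..Suc p}"
      then consider "l \<in> {1..p}" | "l = Suc p" by fastforce
      thus "(\<Sum>i\<in>I. M l i * a i) = 0" using a True by cases auto
    qed
    with a show ?thesis by blast
  next
    case False
    then obtain i0 where i0: "i0 \<in> I" "M (Suc p) i0 \<noteq> 0" by blast
    define I' where "I' = I - {i0}"
    define c where "c = M (Suc p) i0"
    define M' where "M' = (\<lambda>l i. M l i - M l i0 * M (Suc p) i / c)"
    have fI': "finite I'" using Suc.prems I'_def by simp
    have cI': "p < card I'" using Suc.prems i0 I'_def by simp
    from Suc.IH[OF fI' cI', of M'] obtain b where
      b: "\<exists>i\<in>I'. b i \<noteq> 0" "\<forall>l\<in>{1..p}. (\<Sum>i\<in>I'. M' l i * b i) = 0" by blast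
    define S where "S = (\<Sum>i\<in>I'. M (Suc p) i * b i)"
    define a where "a = (\<lambda>i. if i = i0 then - S / c else b i)"
    have c0: "c \<noteq> 0" using i0 c_def by simp
    have split: "(\<Sum>i\<in>I. f i * a i) = f i0 * (- S / c) + (\<Sum>i\<in>I'. f i * b i)" for f
    proof -
      have "(\<Sum>i\<in>I. f i * a i) = f i0 * a i0 + (\<Sum>i\<in>I'. f i * a i)"
        unfolding I'_def using Suc.prems(1) i0(1) by (simp add: sum.remove)
      also have "(\<Sum>i\<in>I'. f i * a i) = (\<Sum>i\<in>I'. f i * b i)"
        by (rule sum.cong) (auto simp: a_def I'_def)
      finally show ?thesis by (simp add: a_def)
    qed
    have "\<forall>l\<in>{1..Suc p}. (\<Sum>i\<in>I. M l i * a i) = 0"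
    proof
      fix l assume "l \<in> {1..Suc p}"
      then consider "l \<in> {1..p}" | "l = Suc p" by fastforce
      thus "(\<Sum>i\<in>I. M l i * a i) = 0"
      proof cases
        case 1
        have "0 = (\<Sum>i\<in>I'. M' l i * b i)" using b 1 by simp
        also have "... = (\<Sum>i\<in>I'. M l i * b i) - M l i0 / c * S"
          unfolding M'_def S_def
          by (simp add: sum_subtractf sum_distrib_left algebra_simps)
        also have "... = (\<Sum>i\<in>I. M l i * a i)" using split[of "M l"] by simp
        finally show ?thesis by simp
      next
        case 2
        show ?thesis using split[of "M l"] 2 c0 by (simp add: S_def c_def)
      qed
    qed
    moreover have "\<exists>i\<in>I. a i \<noteq> 0" using b(1) by (auto simp: a_def I'_def)
    ultimately show ?thesis by blast
  qed
qed

lemma sum_delta_nat: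
  fixes f :: "nat \<Rightarrow> 'b::comm_semiring_1"
  assumes "i \<in> {1..n}"
  shows "(\<Sum>j\<in>{1..n}. f j * (if j = i then 1 else 0)) = f i"
proof -
  have "(\<Sum>j\<in>{1..n}. f j * (if j = i then 1 else 0)) = (\<Sum>j\<in>{1..n}. if j = i then f j else 0)"
    by (rule sum.cong) auto
  also have "... = f i" using assms by (simp add: sum.delta)
  finally show ?thesis .
qed

context hs
begin

abbreviation span where "span S \<equiv> hspan sm S"

lemma span_iff: "y \<in> span S \<longleftrightarrow> (\<exists>F a. finite F \<and> F \<subseteq> S \<and> y = (\<Sum>s\<in>F. sm (a s) s))"
  unfolding hspan_def by simp

lemma span_zero[simp]: "0 \<in> span S"
  unfolding span_iff by (rule exI[of _ "{}"]) simp

lemma span_base: "x \<in> S \<Longrightarrow> x \<in> span S"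
  unfolding span_iff by (rule exI[of _ "{x}"], rule exI[of _ "\<lambda>_. 1"]) simp

lemma span_sm: "x \<in> span S \<Longrightarrow> sm c x \<in> span S"
proof -
  assume "x \<in> span S"
  then obtain F a where F: "finite F" "F \<subseteq> S" "x = (\<Sum>s\<in>F. sm (a s) s)" unfolding span_iff by blast
  have "sm c x = (\<Sum>s\<in>F. sm (c * a s) s)" unfolding F(3) sm_sum_r by simp
  thus ?thesis unfolding span_iff by (intro exI[of _ F] exI[of _ "\<lambda>s. c * a s"]) (use F in simp)
qed

lemma span_add: "x \<in> span S \<Longrightarrow> y \<in> span S \<Longrightarrow> x + y \<in> span S"
proof -
  assume "x \<in> span S" "y \<in> span S"
  then obtain F a G b where F: "finite F" "F \<subseteq> S" "x = (\<Sum>s\<in>F. sm (a s) s)"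
    and G: "finite G" "G \<subseteq> S" "y = (\<Sum>s\<in>G. sm (b s) s)" unfolding span_iff by metis
  define a' where "a' = (\<lambda>s. if s \<in> F then a s else 0)"
  define b' where "b' = (\<lambda>s. if s \<in> G then b s else 0)"
  have x: "x = (\<Sum>s\<in>F \<union> G. sm (a' s) s)"
  proof -
    have "(\<Sum>s\<in>F \<union> G. sm (a' s) s) = (\<Sum>s\<in>F. sm (a' s) s)"
      by (rule sum.mono_neutral_right) (use F G in \<open>auto simp: a'_def\<close>)
    also have "... = x" using F(3) by (auto simp: a'_def intro: sum.cong)
    finally show ?thesis by simp
  qed
  have y: "y = (\<Sum>s\<in>F \<union> G. sm (b' s) s)"
  proof -
    have "(\<Sum>s\<in>F \<union> G. sm (b' s) s) = (\<Sum>s\<in>G. sm (b' s) s)"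
      by (rule sum.mono_neutral_right) (use F G in \<open>auto simp: b'_def\<close>)
    also have "... = y" using G(3) by (auto simp: b'_def intro: sum.cong)
    finally show ?thesis by simp
  qed
  have "x + y = (\<Sum>s\<in>F \<union> G. sm (a' s + b' s) s)"
    unfolding x y by (simp add: sum.distrib[symmetric] sm_add_l)
  thus ?thesis unfolding span_iff by (intro exI[of _ "F \<union> G"] exI[of _ "\<lambda>s. a' s + b' s"]) (use F G in simp)
qed

lemma span_neg: "x \<in> span S \<Longrightarrow> - x \<in> span S"
  using span_sm[of x S "-1"] by (simp add: sm_minus_l)

lemma span_diff: "x \<in> span S \<Longrightarrow> y \<in> span S \<Longrightarrow> x - y \<in> span S"
proof -
  assume "x \<in> span S" "y \<in> span S"
  hence "x + - y \<in> span S" using span_add span_neg by blast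
  thus ?thesis by (metis diff_conv_add_uminus)
qed

lemma span_sum: "(\<And>i. i \<in> I \<Longrightarrow> f i \<in> span S) \<Longrightarrow> (\<Sum>i\<in>I. f i) \<in> span S"
  by (induction I rule: infinite_finite_induct) (auto intro: span_add)

lemma span_lincomb: "(\<And>i. i \<in> I \<Longrightarrow> f i \<in> span S) \<Longrightarrow> (\<Sum>i\<in>I. sm (a i) (f i)) \<in> span S"
  by (rule span_sum) (auto intro: span_sm)

lemma span_subset_span: "T \<subseteq> span S \<Longrightarrow> span T \<subseteq> span S"
proof
  fix y assume T: "T \<subseteq> span S" and "y \<in> span T"
  then obtain F a where F: "finite F" "F \<subseteq> T" "y = (\<Sum>s\<in>F. sm (a s) s)" unfolding span_iff by blast
  show "y \<in> span S" unfolding F(3) by (rule span_lincomb) (use F T in auto)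
qed

lemma span_mono: "T \<subseteq> S \<Longrightarrow> span T \<subseteq> span S"
  by (rule span_subset_span) (auto intro: span_base)

lemma span_superset: "S \<subseteq> span S"
  by (auto intro: span_base)

lemma span_empty: "span {} = {0}"
proof -
  have "x = 0" if "x \<in> span {}" for x
  proof -
    from that obtain F a where F: "finite F" "F \<subseteq> {}" "x = (\<Sum>s\<in>F. sm (a s) s)" unfolding span_iff by blast
    thus ?thesis by simp
  qed
  thus ?thesis by auto
qed

lemma span_insert_cong: "span A = span B \<Longrightarrow> span (insert x A) = span (insert x B)"
proof -
  assume eq: "span A = span B"
  have "insert x A \<subseteq> span (insert x B)"
    using eq span_superset[of A] span_mono[of B "insert x B"] by (auto intro: span_base)
  moreover have "insert x B \<subseteq> span (insert x A)"
    using eq span_superset[of B] span_mono[of A "insert x A"] by (auto intro: span_base)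
  ultimately show ?thesis using span_subset_span by blast
qed

lemma perp_span_gen: "(\<And>s. s \<in> S \<Longrightarrow> ip z s = 0) \<Longrightarrow> y \<in> span S \<Longrightarrow> ip z y = 0"
proof -
  assume p: "\<And>s. s \<in> S \<Longrightarrow> ip z s = 0" and "y \<in> span S"
  then obtain F a where F: "finite F" "F \<subseteq> S" "y = (\<Sum>s\<in>F. sm (a s) s)" unfolding span_iff by blast
  show "ip z y = 0" unfolding F(3) using F p by (auto simp: ip_sum_r intro!: sum.neutral)
qed

lemma perp_span_gen': "(\<And>s. s \<in> S \<Longrightarrow> ip z s = 0) \<Longrightarrow> y \<in> span S \<Longrightarrow> ip y z = 0"
  using perp_span_gen ip_cnj by (metis complex_cnj_zero)

abbreviation ON where "ON n u \<equiv> orthonormal_on ip {1..n} u"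
abbreviation US where "US n u \<equiv> u ` {1..(n::nat)}"

lemma ON_ip: "ON n u \<Longrightarrow> i \<in> {1..n} \<Longrightarrow> j \<in> {1..n} \<Longrightarrow> ip (u i) (u j) = (if i = j then 1 else 0)"
  unfolding orthonormal_on_def by blast

lemma ON_mono: "ON n u \<Longrightarrow> m \<le> n \<Longrightarrow> ON m u"
  unfolding orthonormal_on_def by auto

definition proj :: "nat \<Rightarrow> (nat \<Rightarrow> 'a) \<Rightarrow> 'a \<Rightarrow> 'a" where
  "proj n u x = (\<Sum>j\<in>{1..n}. sm (ip x (u j)) (u j))"

lemma proj_in_span: "proj n u x \<in> span (US n u)"
  unfolding proj_def by (rule span_lincomb) (auto intro: span_base)

lemma coef: "ON n u \<Longrightarrow> i \<in> {1..n} \<Longrightarrow> ip (\<Sum>j\<in>{1..n}. sm (a j) (u j)) (u i) = a i"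
proof -
  assume on: "ON n u" and i: "i \<in> {1..n}"
  have "ip (\<Sum>j\<in>{1..n}. sm (a j) (u j)) (u i) = (\<Sum>j\<in>{1..n}. a j * (if j = i then 1 else 0))"
    unfolding ip_sum_l by (rule sum.cong) (use on i in \<open>auto simp: ON_ip\<close>)
  also have "... = a i" by (rule sum_delta_nat[OF i])
  finally show ?thesis .
qed

lemma ip_proj_u: "ON n u \<Longrightarrow> i \<in> {1..n} \<Longrightarrow> ip (proj n u x) (u i) = ip x (u i)"
  unfolding proj_def by (rule coef)

lemma perp_proj: "ON n u \<Longrightarrow> i \<in> {1..n} \<Longrightarrow> ip (x - proj n u x) (u i) = 0"
  by (simp add: ip_diff_l ip_proj_u)

lemma perp_proj_span: "ON n u \<Longrightarrow> y \<in> span (US n u) \<Longrightarrow> ip (x - proj n u x) y = 0"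
  by (rule perp_span_gen[of "US n u"]) (auto simp: perp_proj)

lemma proj_lincomb: "finite F \<Longrightarrow> proj n u (\<Sum>s\<in>F. sm (a s) s) = (\<Sum>s\<in>F. sm (a s) (proj n u s))"
  unfolding proj_def
  by (simp add: ip_sum_l sm_sum_l sm_sum_r sum.swap[of _ F])

lemma proj_u: "ON n u \<Longrightarrow> i \<in> {1..n} \<Longrightarrow> proj n u (u i) = u i"
proof -
  assume on: "ON n u" and i: "i \<in> {1..n}"
  have "proj n u (u i) = (\<Sum>j\<in>{1..n}. if j = i then u i else 0)"
    unfolding proj_def by (rule sum.cong) (use on i in \<open>auto simp: ON_ip\<close>)
  also have "... = u i" using i by (simp add: sum.delta')
  finally show ?thesis .
qed

lemma proj_span: "ON n u \<Longrightarrow> y \<in> span (US n u) \<Longrightarrow> proj n u y = y"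
proof -
  assume on: "ON n u" and "y \<in> span (US n u)"
  then obtain F a where F: "finite F" "F \<subseteq> US n u" "y = (\<Sum>s\<in>F. sm (a s) s)" unfolding span_iff by blast
  have "proj n u y = (\<Sum>s\<in>F. sm (a s) (proj n u s))" unfolding F(3) by (rule proj_lincomb[OF F(1)])
  also have "... = y" unfolding F(3) by (rule sum.cong) (use F on proj_u in auto)
  finally show ?thesis .
qed

lemma span_iff_proj: "ON n u \<Longrightarrow> y \<in> span (US n u) \<longleftrightarrow> proj n u y = y"
  using proj_span proj_in_span by metis

lemma pythag: "ip x y = 0 \<Longrightarrow> n2 (x + y) = n2 x + n2 y"
proof -
  assume "ip x y = 0"
  hence "ip y x = 0" using ip_cnj[of y x] by simp
  thus ?thesis using \<open>ip x y = 0\<close> unfolding n2_def by (simp add: ip_add_l ip_add_r)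
qed

lemma n2_diff_sym: "n2 (x - y) = n2 (y - x)"
proof -
  have "y - x = sm (-1) (x - y)" by (simp add: sm_minus_l)
  thus ?thesis by (simp add: n2_sm)
qed

lemma proj_best: "ON n u \<Longrightarrow> d \<in> span (US n u) \<Longrightarrow> n2 (x - proj n u x) \<le> n2 (x - d)"
proof -
  assume on: "ON n u" and d: "d \<in> span (US n u)"
  have "proj n u x - d \<in> span (US n u)" using d proj_in_span by (rule_tac span_diff) auto
  hence "ip (x - proj n u x) (proj n u x - d) = 0" by (rule perp_proj_span[OF on])
  hence "n2 ((x - proj n u x) + (proj n u x - d)) = n2 (x - proj n u x) + n2 (proj n u x - d)"
    by (rule pythag)
  moreover have "(x - proj n u x) + (proj n u x - d) = x - d" by simp
  ultimately show ?thesis by (metis le_add_same_cancel1 n2_nonneg)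
qed

lemma n2_lincomb: "ON n u \<Longrightarrow> n2 (\<Sum>j\<in>{1..n}. sm (a j) (u j)) = (\<Sum>j\<in>{1..n}. (cmod (a j))^2)"
proof -
  assume on: "ON n u"
  define y where "y = (\<Sum>j\<in>{1..n}. sm (a j) (u j))"
  have "ip y (\<Sum>j\<in>{1..n}. sm (a j) (u j)) = (\<Sum>j\<in>{1..n}. cnj (a j) * ip y (u j))"
    by (simp add: ip_sum_r)
  hence "ip y y = (\<Sum>j\<in>{1..n}. cnj (a j) * ip y (u j))" using y_def by simp
  also have "... = (\<Sum>j\<in>{1..n}. of_real ((cmod (a j))^2))"
  proof (rule sum.cong[OF refl])
    fix j assume j: "j \<in> {1..n}"
    have "ip y (u j) = a j" unfolding y_def by (rule coef[OF on j])
    thus "cnj (a j) * ip y (u j) = of_real ((cmod (a j))^2)"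
      by (simp add: mult_cnj_cmod2[symmetric] mult.commute del: of_real_power)
  qed
  finally show ?thesis unfolding y_def n2_def by simp
qed

lemma dim_le:
  assumes on: "ON n u" and ow: "ON p w" and sub: "\<And>i. i \<in> {1..p} \<Longrightarrow> w i \<in> span (US n u)"
  shows "p \<le> n"
proof (rule ccontr)
  assume "\<not> p \<le> n"
  hence "n < card {1..p}" by simp
  from lin_sys[OF _ this, of "\<lambda>l i. ip (w i) (u l)"] obtain a where
    a: "\<exists>i\<in>{1..p}. a i \<noteq> 0" "\<forall>l\<in>{1..n}. (\<Sum>i\<in>{1..p}. ip (w i) (u l) * a i) = 0" by auto
  define y where "y = (\<Sum>i\<in>{1..p}. sm (a i) (w i))"
  have y: "y \<in> span (US n u)" unfolding y_def by (rule span_lincomb) (use sub in auto)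
  have "ip y (u l) = 0" if "l \<in> {1..n}" for l
    using a(2) that by (simp add: y_def ip_sum_l mult.commute)
  hence "proj n u y = 0" unfolding proj_def by simp
  hence "y = 0" using proj_span[OF on y] by simp
  moreover have "n2 y > 0"
  proof -
    obtain i where i: "i \<in> {1..p}" "a i \<noteq> 0" using a(1) by blast
    have "n2 y = (\<Sum>j\<in>{1..p}. (cmod (a j))^2)" unfolding y_def by (rule n2_lincomb[OF ow])
    also have "... > 0" by (rule sum_pos2[OF _ i(1)]) (use i in auto)
    finally show ?thesis .
  qed
  ultimately show False by (metis less_irrefl n2_eq0_iff)
qed

definition normalize :: "'a \<Rightarrow> 'a" where
  "normalize z = sm (of_real (1 / sqrt (n2 z))) z"

lemma n2_normalize: "z \<noteq> 0 \<Longrightarrow> n2 (normalize z) = 1"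
  unfolding normalize_def n2_sm using n2_pos[of z]
  by (simp add: power_divide real_sqrt_pow2 norm_divide)

lemma ip_normalize_self: "z \<noteq> 0 \<Longrightarrow> ip (normalize z) (normalize z) = 1"
  using n2_normalize ip_self_n2 by simp

lemma normalize_inv: "z \<noteq> 0 \<Longrightarrow> z = sm (of_real (sqrt (n2 z))) (normalize z)"
  unfolding normalize_def using n2_pos[of z] by simp

lemma US_upd: "US (Suc n) (u(Suc n := e)) = insert e (US n u)"
proof -
  have "{1..Suc n} = insert (Suc n) {1..n}" by auto
  moreover have "(u(Suc n := e)) ` {1..n} = u ` {1..n}" by auto
  ultimately show ?thesis by (metis fun_upd_same image_insert)
qed

lemma ON_upd:
  assumes on: "ON n u" and e: "ip e e = 1" and p: "\<And>i. i \<in> {1..n} \<Longrightarrow> ip e (u i) = 0"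
  shows "ON (Suc n) (u(Suc n := e))"
  unfolding orthonormal_on_def
proof (intro ballI)
  fix i j assume i: "i \<in> {1..Suc n}" and j: "j \<in> {1..Suc n}"
  have p': "ip (u i) e = 0" if "i \<in> {1..n}" for i using p[OF that] ip_cnj[of "u i" e] by simp
  show "ip ((u(Suc n := e)) i) ((u(Suc n := e)) j) = (if i = j then 1 else 0)"
    using i j on e p p' by (cases "i = Suc n"; cases "j = Suc n") (auto simp: ON_ip)
qed

lemma gs_step:
  assumes on: "ON n u" and x: "x \<notin> span (US n u)"
  shows "\<exists>e. ON (Suc n) (u(Suc n := e)) \<and> span (insert e (US n u)) = span (insert x (US n u))"
proof -
  define z where "z = x - proj n u x"
  have z0: "z \<noteq> 0" using x proj_in_span[of n u x] unfolding z_def by auto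
  define e where "e = normalize z"
  have ee: "ip e e = 1" unfolding e_def by (rule ip_normalize_self[OF z0])
  have pe: "ip e (u i) = 0" if "i \<in> {1..n}" for i
    unfolding e_def normalize_def z_def using perp_proj[OF on that] by simp
  have "e \<in> span (insert x (US n u))"
  proof -
    have "proj n u x \<in> span (insert x (US n u))"
      using proj_in_span[of n u x] span_mono[of "US n u" "insert x (US n u)"] by blast
    hence "z \<in> span (insert x (US n u))" unfolding z_def
      by (rule span_diff[OF span_base[OF insertI1]])
    thus ?thesis unfolding e_def normalize_def by (rule span_sm)
  qed
  moreover have "x \<in> span (insert e (US n u))"
  proof -
    have "x = proj n u x + sm (of_real (sqrt (n2 z))) e" using normalize_inv[OF z0] unfolding z_def e_def by simp
    moreover have "proj n u x \<in> span (insert e (US n u))"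
      using proj_in_span[of n u x] span_mono[of "US n u" "insert e (US n u)"] by blast
    moreover have "sm (of_real (sqrt (n2 z))) e \<in> span (insert e (US n u))" by (auto intro: span_sm span_base)
    ultimately show ?thesis by (metis span_add)
  qed
  ultimately have "span (insert e (US n u)) = span (insert x (US n u))"
    using span_subset_span[of "insert e (US n u)" "insert x (US n u)"]
      span_subset_span[of "insert x (US n u)" "insert e (US n u)"]
      span_superset[of "insert x (US n u)"] span_superset[of "insert e (US n u)"] by auto
  with ON_upd[OF on ee pe] show ?thesis by blast
qed

lemma gs_ext:
  assumes "finite S" and on: "ON n u"
  shows "\<exists>n' u'. n \<le> n' \<and> (\<forall>i\<in>{1..n}. u' i = u i) \<and> ON n' u' \<and> span (US n' u') = span (US n u \<union> S)"
  using assms(1)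
proof (induction S rule: finite_induct)
  case empty
  show ?case by (rule exI[of _ n], rule exI[of _ u]) (use on in simp)
next
  case (insert x S)
  then obtain n' u' where IH: "n \<le> n'" "\<forall>i\<in>{1..n}. u' i = u i" "ON n' u'" "span (US n' u') = span (US n u \<union> S)"
    by blast
  have eqi: "US n u \<union> insert x S = insert x (US n u \<union> S)" by auto
  show ?case
  proof (cases "x \<in> span (US n' u')")
    case True
    have "span (insert x (US n u \<union> S)) = span (US n u \<union> S)"
    proof
      show "span (insert x (US n u \<union> S)) \<subseteq> span (US n u \<union> S)"
        by (rule span_subset_span) (use True IH(4) span_superset in auto)
      show "span (US n u \<union> S) \<subseteq> span (insert x (US n u \<union> S))" by (rule span_mono) auto
    qed
    thus ?thesis using IH eqi by metis
  next
    case False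
    from gs_step[OF IH(3) False] obtain e where
      e: "ON (Suc n') (u'(Suc n' := e))" "span (insert e (US n' u')) = span (insert x (US n' u'))" by blast
    have "span (US (Suc n') (u'(Suc n' := e))) = span (US n u \<union> insert x S)"
      unfolding US_upd eqi e(2) by (rule span_insert_cong[OF IH(4)])
    moreover have "\<forall>i\<in>{1..n}. (u'(Suc n' := e)) i = u i" using IH(1,2) by auto
    ultimately show ?thesis using e(1) IH(1) by (metis le_SucI)
  qed
qed

lemma complement:
  assumes on: "ON N u" and w: "w \<in> span (US N u)" and ww: "ip w w = 1"
  shows "\<exists>t. ON N t \<and> t 1 = w \<and> span (US N t) = span (US N u)"
proof -
  define t0 where "t0 = (\<lambda>i::nat. w)"
  have on1: "ON 1 t0" unfolding orthonormal_on_def t0_def using ww by auto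
  from gs_ext[OF _ on1, of "US N u"] obtain n' t where
    t: "1 \<le> n'" "\<forall>i\<in>{1..1}. t i = t0 i" "ON n' t" "span (US n' t) = span (US 1 t0 \<union> US N u)" by blast
  have "US 1 t0 = {w}" unfolding t0_def by auto
  hence sp: "span (US n' t) = span (US N u)"
    using t(4) w span_superset[of "US N u"] span_subset_span[of "insert w (US N u)" "US N u"]
      span_mono[of "US N u" "insert w (US N u)"] by auto
  have "n' \<le> N"
  proof (rule dim_le[OF on t(3)])
    fix i assume "i \<in> {1..n'}"
    hence "t i \<in> span (US n' t)" by (intro span_base imageI)
    thus "t i \<in> span (US N u)" using sp by simp
  qed
  moreover have "N \<le> n'"
  proof (rule dim_le[OF t(3) on])
    fix i assume "i \<in> {1..N}"
    hence "u i \<in> span (US N u)" by (intro span_base imageI)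
    thus "u i \<in> span (US n' t)" using sp by simp
  qed
  ultimately have "n' = N" by simp
  thus ?thesis using t sp unfolding t0_def by auto
qed

lemma ON_exists_ext:
  assumes inf: "infinite_dimensional sm" and on: "ON n u"
  shows "\<exists>u'. ON (n + p) u' \<and> (\<forall>i\<in>{1..n}. u' i = u i)"
proof (induction p)
  case 0 thus ?case using on by auto
next
  case (Suc p)
  then obtain u' where u': "ON (n + p) u'" "\<forall>i\<in>{1..n}. u' i = u i" by blast
  have "span (US (n+p) u') \<noteq> UNIV" using inf unfolding infinite_dimensional_def by auto
  then obtain x where "x \<notin> span (US (n+p) u')" by blast
  from gs_step[OF u'(1) this] obtain e where "ON (Suc (n+p)) (u'(Suc (n+p) := e))" by blast
  moreover have "\<forall>i\<in>{1..n}. (u'(Suc (n+p) := e)) i = u i" using u'(2) by auto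
  ultimately show ?case by auto
qed

lemma ON_exists: "infinite_dimensional sm \<Longrightarrow> \<exists>u. ON k u"
  using ON_exists_ext[of 0 undefined k] by (auto simp: orthonormal_on_def)

end

lemma sum_first: "(\<Sum>i\<in>{1..Suc k}. g i) = g 1 + (\<Sum>i\<in>{1..k}. g (Suc i))"
proof -
  have "(\<Sum>i\<in>{1..Suc k}. g i) = g 1 + (\<Sum>i\<in>{Suc 1..Suc k}. g i)"
    by (rule sum.atLeast_Suc_atMost) simp
  also have "(\<Sum>i\<in>{Suc 1..Suc k}. g i) = (\<Sum>i\<in>{1..k}. g (Suc i))"
    by (rule sum.shift_bounds_cl_Suc_ivl)
  finally show ?thesis .
qed

lemma sum_last: "(\<Sum>i\<in>{1..Suc k}. g i) = (\<Sum>i\<in>{1..k}. g i) + g (Suc k)"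
  by simp

lemma set_first: "{1..Suc k} = insert 1 (Suc ` {1..k})"
proof -
  have "Suc ` {1..k} = {Suc 1..Suc k}" by (rule image_Suc_atLeastAtMost)
  moreover have "insert 1 {Suc 1..Suc k} = {1..Suc k}" by (rule atLeastAtMost_insertL) simp
  ultimately show ?thesis by simp
qed

locale hsA = hs sm ip for sm :: "complex \<Rightarrow> 'a::ab_group_add \<Rightarrow> 'a" and ip +
  fixes A :: "'a \<Rightarrow> 'a"
  assumes A_sa: "self_adjoint_op sm ip A"
begin

lemmas sa_all = A_sa[unfolded self_adjoint_op_def bounded_op_def]

lemma A_add: "A (x + y) = A x + A y"
  using conjunct1[OF conjunct1[OF sa_all]] by blast
lemma A_sm: "A (sm a x) = sm a (A x)"
  using conjunct1[OF conjunct2[OF conjunct1[OF sa_all]]] by blast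
lemma A_bdd: "\<exists>K. \<forall>x. hnorm ip (A x) \<le> K * hnorm ip x"
  using conjunct2[OF conjunct2[OF conjunct1[OF sa_all]]] by blast
lemma A_sym: "ip (A x) y = ip x (A y)"
  using conjunct2[OF sa_all] by blast

lemma A_zero[simp]: "A 0 = 0"
proof -
  have "A (0 + 0) = A 0 + A 0" by (rule A_add)
  thus ?thesis by simp
qed

lemma A_sum: "A (\<Sum>i\<in>F. f i) = (\<Sum>i\<in>F. A (f i))"
  by (induction F rule: infinite_finite_induct) (auto simp: A_add)

lemma A_lincomb: "A (\<Sum>i\<in>F. sm (a i) (f i)) = (\<Sum>i\<in>F. sm (a i) (A (f i)))"
  by (simp add: A_sum A_sm)

lemma A_minus: "A (- x) = - A x"
  using A_sm[of "-1" x] by (simp add: sm_minus_l)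

lemma A_diff: "A (x - y) = A x - A y"
  by (metis A_add A_minus diff_conv_add_uminus)

abbreviation R where "R x \<equiv> Re (ip (A x) x)"

lemma ipA_real: "ip (A x) x = complex_of_real (R x)"
proof -
  have "cnj (ip (A x) x) = ip (A x) x" using ip_cnj[of x "A x"] A_sym[of x x] by simp
  from arg_cong[OF this, of Im] have "Im (ip (A x) x) = 0" by simp
  thus ?thesis by (simp add: complex_eq_iff)
qed

lemma R_bound: "\<exists>K\<ge>0. \<forall>x. \<bar>R x\<bar> \<le> K * n2 x"
proof -
  obtain K0 where K0: "\<forall>x. hnorm ip (A x) \<le> K0 * hnorm ip x" using A_bdd by blast
  define K where "K = \<bar>K0\<bar>"
  have K: "\<forall>x. sqrt (n2 (A x)) \<le> K * sqrt (n2 x)"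
  proof
    fix x
    have "sqrt (n2 (A x)) \<le> K0 * sqrt (n2 x)" using K0 hnorm_n2 by metis
    also have "... \<le> K * sqrt (n2 x)" unfolding K_def by (rule mult_right_mono) auto
    finally show "sqrt (n2 (A x)) \<le> K * sqrt (n2 x)" .
  qed
  have "\<bar>R x\<bar> \<le> K * n2 x" for x
  proof -
    have "n2 (A x) \<le> K^2 * n2 x"
    proof -
      have "(sqrt (n2 (A x)))^2 \<le> (K * sqrt (n2 x))^2"
        by (rule power_mono[OF K[rule_format]]) simp
      thus ?thesis by (simp add: power_mult_distrib)
    qed
    have "(cmod (ip (A x) x))^2 \<le> n2 (A x) * n2 x" by (rule cauchy_schwarz)
    also have "... \<le> (K^2 * n2 x) * n2 x" by (rule mult_right_mono[OF \<open>n2 (A x) \<le> _\<close>]) simp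
    also have "... = (K * n2 x)^2" by (simp add: power2_eq_square)
    finally have "cmod (ip (A x) x) \<le> K * n2 x"
      by (rule power2_le_imp_le) (simp add: K_def)
    moreover have "\<bar>R x\<bar> \<le> cmod (ip (A x) x)" by (rule abs_Re_le_cmod)
    ultimately show ?thesis by linarith
  qed
  moreover have "K \<ge> 0" unfolding K_def by simp
  ultimately show ?thesis by blast
qed

definition E :: "'a set \<Rightarrow> complex set" where
  "E U = {\<mu>. \<exists>z\<in>U. z \<noteq> 0 \<and> (\<forall>x\<in>U. ip (A z - sm \<mu> z) x = 0)}"

lemma EV1:
  assumes on: "ON k v"
  shows "mat_eigenvalue k (compression ip A v) \<mu> \<longleftrightarrow> \<mu> \<in> E (span (US k v))"
proof
  assume "mat_eigenvalue k (compression ip A v) \<mu>"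
  then obtain a where a: "\<exists>i<k. a i \<noteq> 0"
    "\<forall>i<k. (\<Sum>j<k. compression ip A v i j * a j) = \<mu> * a i"
    unfolding mat_eigenvalue_def by blast
  define b where "b = (\<lambda>j. a (j - 1))"
  define z where "z = (\<Sum>j\<in>{1..k}. sm (b j) (v j))"
  have zs: "z \<in> span (US k v)" unfolding z_def by (rule span_lincomb) (auto intro: span_base)
  have zc: "ip z (v l) = b l" if "l \<in> {1..k}" for l unfolding z_def by (rule coef[OF on that])
  have Az: "ip (A z) (v l) = (\<Sum>j\<in>{1..k}. ip (A (v j)) (v l) * b j)" for l
    unfolding z_def A_lincomb by (simp add: ip_sum_l mult.commute)
  have key: "ip (A z) (v l) = \<mu> * ip z (v l)" if l: "l \<in> {1..k}" for l
  proof -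
    obtain i where i: "l = Suc i" "i < k" using l by (cases l) auto
    have "ip (A z) (v l) = (\<Sum>j<k. ip (A (v (Suc j))) (v (Suc i)) * b (Suc j))"
      unfolding Az i(1) by (rule sum_bounds_lt_plus1[symmetric])
    also have "... = (\<Sum>j<k. compression ip A v i j * a j)"
      by (simp add: compression_def b_def)
    also have "... = \<mu> * a i" using a(2) i(2) by blast
    also have "... = \<mu> * ip z (v l)" using zc[OF l] by (simp add: b_def i(1))
    finally show ?thesis .
  qed
  have z0: "z \<noteq> 0"
  proof
    assume "z = 0"
    obtain i where i: "i < k" "a i \<noteq> 0" using a(1) by blast
    have "Suc i \<in> {1..k}" using i by simp
    from zc[OF this] \<open>z = 0\<close> have "b (Suc i) = 0" by simp
    thus False using i by (simp add: b_def)
  qed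
  have "\<forall>x\<in>span (US k v). ip (A z - sm \<mu> z) x = 0"
  proof
    fix x assume "x \<in> span (US k v)"
    show "ip (A z - sm \<mu> z) x = 0"
      by (rule perp_span_gen[OF _ \<open>x \<in> _\<close>]) (auto simp: ip_diff_l key)
  qed
  thus "\<mu> \<in> E (span (US k v))" unfolding E_def using zs z0 by blast
next
  assume "\<mu> \<in> E (span (US k v))"
  then obtain z where z: "z \<in> span (US k v)" "z \<noteq> 0" "\<forall>x\<in>span (US k v). ip (A z - sm \<mu> z) x = 0"
    unfolding E_def by blast
  define a where "a = (\<lambda>j. ip z (v (Suc j)))"
  have zp: "z = (\<Sum>j\<in>{1..k}. sm (ip z (v j)) (v j))" using proj_span[OF on z(1)] unfolding proj_def by simp
  have "\<exists>i<k. a i \<noteq> 0"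
  proof (rule ccontr)
    assume "\<not> (\<exists>i<k. a i \<noteq> 0)"
    hence "ip z (v j) = 0" if "j \<in> {1..k}" for j using that
      by (cases j) (auto simp: a_def)
    hence "z = 0" using zp by simp
    thus False using z(2) by simp
  qed
  moreover have "\<forall>i<k. (\<Sum>j<k. compression ip A v i j * a j) = \<mu> * a i"
  proof (intro allI impI)
    fix i assume i: "i < k"
    have "(\<Sum>j<k. compression ip A v i j * a j) = (\<Sum>j<k. ip (A (v (Suc j))) (v (Suc i)) * ip z (v (Suc j)))"
      by (simp add: compression_def a_def)
    also have "... = (\<Sum>j\<in>{1..k}. ip (A (v j)) (v (Suc i)) * ip z (v j))"
      by (rule sum_bounds_lt_plus1)
    also have "... = ip (A z) (v (Suc i))"
      by (subst (2) zp) (simp add: A_lincomb ip_sum_l mult.commute)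
    also have "... = \<mu> * ip z (v (Suc i))"
    proof -
      have "v (Suc i) \<in> span (US k v)" using i by (intro span_base) auto
      hence "ip (A z - sm \<mu> z) (v (Suc i)) = 0" using z(3) by blast
      thus ?thesis by (simp add: ip_diff_l)
    qed
    finally show "(\<Sum>j<k. compression ip A v i j * a j) = \<mu> * a i" by (simp add: a_def)
  qed
  ultimately show "mat_eigenvalue k (compression ip A v) \<mu>" unfolding mat_eigenvalue_def by blast
qed

lemma E_eq: "ON k v \<Longrightarrow> E (span (US k v)) = {\<mu>. mat_eigenvalue k (compression ip A v) \<mu>}"
  using EV1 by blast

lemma E_finite: "ON k v \<Longrightarrow> finite (E (span (US k v)))"
  using E_eq mat_eig_finite by simp

lemma E_nonempty: "ON k v \<Longrightarrow> 0 < k \<Longrightarrow> E (span (US k v)) \<noteq> {}"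
  using E_eq mat_eig_exists by auto

lemma smallest_eig: "ON k v \<Longrightarrow> smallest_eigenvalue k (compression ip A v) = Min (Re ` E (span (US k v)))"
proof -
  assume on: "ON k v"
  have "{Re \<mu> | \<mu>. mat_eigenvalue k (compression ip A v) \<mu>} = Re ` E (span (US k v))"
    using E_eq[OF on] by auto
  thus ?thesis unfolding smallest_eigenvalue_def by simp
qed

lemma peel:
  assumes on: "ON (Suc k) v" and mu: "\<mu> \<in> E (span (US (Suc k) v))"
  shows "\<exists>t. ON (Suc k) t \<and> span (US (Suc k) t) = span (US (Suc k) v) \<and> ip (A (t 1)) (t 1) = \<mu>
           \<and> (\<forall>x\<in>span (US (Suc k) v). ip (A (t 1) - sm \<mu> (t 1)) x = 0)"
proof -
  let ?U = "span (US (Suc k) v)"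
  obtain z where z: "z \<in> ?U" "z \<noteq> 0" "\<forall>x\<in>?U. ip (A z - sm \<mu> z) x = 0"
    using mu unfolding E_def by blast
  define c where "c = complex_of_real (1 / sqrt (n2 z))"
  define w where "w = normalize z"
  have wc: "w = sm c z" unfolding w_def normalize_def c_def ..
  have wU: "w \<in> ?U" unfolding wc by (rule span_sm[OF z(1)])
  have ww: "ip w w = 1" unfolding w_def by (rule ip_normalize_self[OF z(2)])
  have Aw: "A w - sm \<mu> w = sm c (A z - sm \<mu> z)"
    unfolding wc by (simp add: A_sm sm_diff_r mult.commute)
  have perpw: "\<forall>x\<in>?U. ip (A w - sm \<mu> w) x = 0" unfolding Aw using z(3) by simp
  obtain t where t: "ON (Suc k) t" "t 1 = w" "span (US (Suc k) t) = ?U"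
    using complement[OF on wU ww] by blast
  have "ip (A w) w = \<mu>"
  proof -
    have "ip (A w - sm \<mu> w) w = 0" using perpw wU by blast
    thus ?thesis using ww by (simp add: ip_diff_l)
  qed
  thus ?thesis using t perpw by auto
qed

lemma ON_shift: "ON (Suc k) t \<Longrightarrow> ON k (\<lambda>j. t (Suc j))"
  unfolding orthonormal_on_def by auto

lemma US_first: "US (Suc k) t = insert (t 1) (US k (\<lambda>j. t (Suc j)))"
  by (simp only: set_first image_insert image_image)

lemma split_first:
  assumes on: "ON (Suc k) t" and x: "x \<in> span (US (Suc k) t)"
  shows "x - sm (ip x (t 1)) (t 1) \<in> span (US k (\<lambda>j. t (Suc j)))"
proof -
  define y where "y = x - sm (ip x (t 1)) (t 1)"
  have t1: "t 1 \<in> span (US (Suc k) t)" by (intro span_base) auto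
  have yU: "y \<in> span (US (Suc k) t)" unfolding y_def by (rule span_diff[OF x span_sm[OF t1]])
  have one: "1 \<in> {1..Suc k}" by simp
  have y1: "ip y (t 1) = 0" unfolding y_def using ON_ip[OF on one one] by (simp add: ip_diff_l)
  have "y = proj (Suc k) t y" using proj_span[OF on yU] by simp
  also have "... = sm (ip y (t 1)) (t 1) + (\<Sum>j\<in>{1..k}. sm (ip y (t (Suc j))) (t (Suc j)))"
    unfolding proj_def by (rule sum_first)
  also have "... = (\<Sum>j\<in>{1..k}. sm (ip y (t (Suc j))) (t (Suc j)))" using y1 by simp
  finally have "y = (\<Sum>j\<in>{1..k}. sm (ip y (t (Suc j))) (t (Suc j)))" .
  moreover have "(\<Sum>j\<in>{1..k}. sm (ip y (t (Suc j))) (t (Suc j))) \<in> span (US k (\<lambda>j. t (Suc j)))"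
    by (rule span_lincomb) (auto intro: span_base)
  ultimately show ?thesis unfolding y_def by simp
qed

lemma peel_decomp:
  assumes on: "ON (Suc k) t"
    and w1: "ip (A (t 1)) (t 1) = \<mu>"
    and perp: "\<forall>x\<in>span (US (Suc k) t). ip (A (t 1) - sm \<mu> (t 1)) x = 0"
  shows "\<forall>y\<in>span (US k (\<lambda>j. t (Suc j))). ip (t 1) y = 0 \<and> ip (A (t 1)) y = 0 \<and> ip y (t 1) = 0 \<and> ip (A y) (t 1) = 0"
    and "\<forall>x\<in>span (US (Suc k) t). R x = (cmod (ip x (t 1)))^2 * Re \<mu> + R (x - sm (ip x (t 1)) (t 1))
            \<and> n2 x = (cmod (ip x (t 1)))^2 + n2 (x - sm (ip x (t 1)) (t 1))"
proof -
  let ?t' = "\<lambda>j. t (Suc j)"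
  let ?U' = "span (US k ?t')"
  let ?U = "span (US (Suc k) t)"
  have sub: "?U' \<subseteq> ?U" by (rule span_mono) (auto simp: US_first)
  have one: "1 \<in> {1..Suc k}" by simp
  have ww: "ip (t 1) (t 1) = 1" using ON_ip[OF on one one] by simp
  have A1: "\<forall>y\<in>?U'. ip (t 1) y = 0 \<and> ip (A (t 1)) y = 0 \<and> ip y (t 1) = 0 \<and> ip (A y) (t 1) = 0"
  proof
    fix y assume y: "y \<in> ?U'"
    have a: "ip (t 1) y = 0"
    proof (rule perp_span_gen[OF _ y])
      fix s assume "s \<in> US k ?t'"
      then obtain j where j: "j \<in> {1..k}" "s = t (Suc j)" by blast
      have "Suc j \<in> {1..Suc k}" using j by simp
      thus "ip (t 1) s = 0" using ON_ip[OF on one] j by simp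
    qed
    have b: "ip (A (t 1)) y = 0"
    proof -
      have "ip (A (t 1) - sm \<mu> (t 1)) y = 0" using perp sub y by blast
      thus ?thesis using a by (simp add: ip_diff_l)
    qed
    have c: "ip y (t 1) = 0" using a ip_cnj[of y "t 1"] by simp
    have d: "ip (A y) (t 1) = 0" using b A_sym[of y "t 1"] ip_cnj[of "A (t 1)" y] by simp
    show "ip (t 1) y = 0 \<and> ip (A (t 1)) y = 0 \<and> ip y (t 1) = 0 \<and> ip (A y) (t 1) = 0"
      using a b c d by blast
  qed
  thus "\<forall>y\<in>?U'. ip (t 1) y = 0 \<and> ip (A (t 1)) y = 0 \<and> ip y (t 1) = 0 \<and> ip (A y) (t 1) = 0" .
  show "\<forall>x\<in>?U. R x = (cmod (ip x (t 1)))^2 * Re \<mu> + R (x - sm (ip x (t 1)) (t 1))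
            \<and> n2 x = (cmod (ip x (t 1)))^2 + n2 (x - sm (ip x (t 1)) (t 1))"
  proof
    fix x assume x: "x \<in> ?U"
    define c where "c = ip x (t 1)"
    define y where "y = x - sm c (t 1)"
    have yU: "y \<in> ?U'" unfolding y_def c_def by (rule split_first[OF on x])
    have xe: "x = sm c (t 1) + y" unfolding y_def by simp
    have h: "ip (t 1) y = 0" "ip (A (t 1)) y = 0" "ip y (t 1) = 0" "ip (A y) (t 1) = 0"
      using A1 yU by auto
    have "ip (A x) x = c * cnj c * ip (A (t 1)) (t 1) + c * ip (A (t 1)) y + cnj c * ip (A y) (t 1) + ip (A y) y"
      unfolding xe by (simp add: A_add A_sm ip_add_l ip_add_r algebra_simps)
    also have "... = complex_of_real ((cmod c)^2 * Re \<mu>) + ip (A y) y"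
    proof -
      have mr: "\<mu> = complex_of_real (Re \<mu>)" using w1 ipA_real[of "t 1"] by (metis Re_complex_of_real)
      have w1': "ip (A (t 1)) (t 1) = complex_of_real (Re \<mu>)" using w1 mr by simp
      show ?thesis using h w1' by (simp add: mult_cnj_cmod2 del: of_real_power)
    qed
    finally have "R x = (cmod c)^2 * Re \<mu> + R y" by simp
    moreover have "n2 x = (cmod c)^2 + n2 y"
    proof -
      have "ip (sm c (t 1)) y = 0" using h by simp
      hence "n2 x = n2 (sm c (t 1)) + n2 y" unfolding xe by (rule pythag)
      moreover have "n2 (t 1) = 1" using ww unfolding n2_def by simp
      ultimately show ?thesis by (simp add: n2_sm)
    qed
    ultimately show "R x = (cmod (ip x (t 1)))^2 * Re \<mu> + R (x - sm (ip x (t 1)) (t 1))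
            \<and> n2 x = (cmod (ip x (t 1)))^2 + n2 (x - sm (ip x (t 1)) (t 1))"
      unfolding c_def y_def by simp
  qed
qed

lemma E_sub:
  assumes on: "ON (Suc k) t"
    and w1: "ip (A (t 1)) (t 1) = \<mu>"
    and perp: "\<forall>x\<in>span (US (Suc k) t). ip (A (t 1) - sm \<mu> (t 1)) x = 0"
  shows "E (span (US k (\<lambda>j. t (Suc j)))) \<subseteq> E (span (US (Suc k) t))"
proof
  let ?t' = "\<lambda>j. t (Suc j)"
  let ?U' = "span (US k ?t')"
  let ?U = "span (US (Suc k) t)"
  have sub: "?U' \<subseteq> ?U" by (rule span_mono) (auto simp: US_first)
  note P = peel_decomp(1)[OF on w1 perp]
  fix \<nu> assume "\<nu> \<in> E ?U'"
  then obtain z where z: "z \<in> ?U'" "z \<noteq> 0" "\<forall>x\<in>?U'. ip (A z - sm \<nu> z) x = 0"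
    unfolding E_def by blast
  have "\<forall>x\<in>?U. ip (A z - sm \<nu> z) x = 0"
  proof
    fix x assume x: "x \<in> ?U"
    show "ip (A z - sm \<nu> z) x = 0"
    proof (rule perp_span_gen[of "insert (t 1) (US k ?t')"])
      fix s assume "s \<in> insert (t 1) (US k ?t')"
      then consider "s = t 1" | "s \<in> US k ?t'" by blast
      thus "ip (A z - sm \<nu> z) s = 0"
      proof cases
        case 1
        have "ip (A z) (t 1) = 0" "ip z (t 1) = 0" using P z(1) by auto
        thus ?thesis using 1 by (simp add: ip_diff_l)
      next
        case 2
        thus ?thesis using z(3) span_base by blast
      qed
    next
      show "x \<in> span (insert (t 1) (US k ?t'))" using x US_first[where k=k and t=t] by metis
    qed
  qed
  thus "\<nu> \<in> E ?U" unfolding E_def using z sub by blast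
qed

lemma rayleigh:
  assumes "ON k v" "0 < k" "x \<in> span (US k v)"
  shows "Min (Re ` E (span (US k v))) * n2 x \<le> R x \<and> R x \<le> Max (Re ` E (span (US k v))) * n2 x"
  using assms
proof (induction k arbitrary: v x)
  case 0 thus ?case by simp
next
  case (Suc k)
  let ?U = "span (US (Suc k) v)"
  have fin: "finite (Re ` E ?U)" using E_finite[OF Suc.prems(1)] by simp
  obtain \<mu> where mu: "\<mu> \<in> E ?U" using E_nonempty[OF Suc.prems(1)] by blast
  obtain t where t: "ON (Suc k) t" "span (US (Suc k) t) = ?U" "ip (A (t 1)) (t 1) = \<mu>"
    "\<forall>x\<in>?U. ip (A (t 1) - sm \<mu> (t 1)) x = 0"
    using peel[OF Suc.prems(1) mu] by blast
  have perp: "\<forall>x\<in>span (US (Suc k) t). ip (A (t 1) - sm \<mu> (t 1)) x = 0" using t by simp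
  let ?t' = "\<lambda>j. t (Suc j)"
  let ?U' = "span (US k ?t')"
  define c where "c = ip x (t 1)"
  define y where "y = x - sm c (t 1)"
  have xU: "x \<in> span (US (Suc k) t)" using Suc.prems(3) t(2) by simp
  have yU: "y \<in> ?U'" unfolding y_def c_def by (rule split_first[OF t(1) xU])
  have dec: "R x = (cmod c)^2 * Re \<mu> + R y" "n2 x = (cmod c)^2 + n2 y"
    using peel_decomp(2)[OF t(1) t(3) perp] xU unfolding c_def y_def by auto
  have muin: "Re \<mu> \<in> Re ` E ?U" using mu by blast
  have mn: "Min (Re ` E ?U) \<le> Re \<mu>" by (rule Min_le[OF fin muin])
  have mx: "Re \<mu> \<le> Max (Re ` E ?U)" by (rule Max_ge[OF fin muin])
  have c2: "0 \<le> (cmod c)^2" by simp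
  show ?case
  proof (cases "k = 0")
    case True
    hence "y = 0" using yU span_empty by simp
    hence e: "R x = (cmod c)^2 * Re \<mu>" "n2 x = (cmod c)^2" using dec by auto
    have "Min (Re ` E ?U) * (cmod c)^2 \<le> Re \<mu> * (cmod c)^2" by (rule mult_right_mono[OF mn c2])
    moreover have "Re \<mu> * (cmod c)^2 \<le> Max (Re ` E ?U) * (cmod c)^2" by (rule mult_right_mono[OF mx c2])
    ultimately show ?thesis unfolding e by (simp add: algebra_simps)
  next
    case False
    have on': "ON k ?t'" by (rule ON_shift[OF t(1)])
    from Suc.IH[OF on' _ yU] False have IH:
      "Min (Re ` E ?U') * n2 y \<le> R y" "R y \<le> Max (Re ` E ?U') * n2 y" by auto
    have sub: "Re ` E ?U' \<subseteq> Re ` E ?U" using E_sub[OF t(1) t(3) perp] t(2) by auto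
    have ne: "Re ` E ?U' \<noteq> {}" using E_nonempty[OF on'] False by simp
    have m1: "Min (Re ` E ?U) \<le> Min (Re ` E ?U')" by (rule Min_antimono[OF sub ne fin])
    have m2: "Max (Re ` E ?U') \<le> Max (Re ` E ?U)" by (rule Max_mono[OF sub ne fin])
    have y0: "0 \<le> n2 y" by simp
    have "Min (Re ` E ?U) * n2 x = Min (Re ` E ?U) * (cmod c)^2 + Min (Re ` E ?U) * n2 y"
      using dec by (simp add: algebra_simps)
    also have "... \<le> Re \<mu> * (cmod c)^2 + Min (Re ` E ?U') * n2 y"
      by (intro add_mono mult_right_mono m1 mn c2 y0)
    also have "... \<le> R x" using dec IH by (simp add: mult.commute)
    finally have L: "Min (Re ` E ?U) * n2 x \<le> R x" .
    have "R x \<le> Re \<mu> * (cmod c)^2 + Max (Re ` E ?U') * n2 y" using dec IH by (simp add: mult.commute)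
    also have "... \<le> Max (Re ` E ?U) * (cmod c)^2 + Max (Re ` E ?U) * n2 y"
      by (intro add_mono mult_right_mono m2 mx c2 y0)
    also have "... = Max (Re ` E ?U) * n2 x" using dec by (simp add: algebra_simps)
    finally show ?thesis using L by simp
  qed
qed

end

context hsA
begin

lemma TI:
  assumes on: "ON n u" and oz: "ON n z" and sp: "span (US n u) = span (US n z)"
  shows "(\<Sum>i\<in>{1..n}. R (u i)) = (\<Sum>i\<in>{1..n}. R (z i))"
proof -
  have h1: "ip (A (u i)) (u i) = (\<Sum>l\<in>{1..n}. ip (z l) (u i) * ip (A (u i)) (z l))" if i: "i \<in> {1..n}" for i
  proof -
    have "u i \<in> span (US n u)" using i by (intro span_base imageI)
    hence ui: "u i \<in> span (US n z)" using sp by simp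
    have "u i = proj n z (u i)" using proj_span[OF oz ui] by simp
    from arg_cong[OF this, of "ip (A (u i))"]
    have "ip (A (u i)) (u i) = ip (A (u i)) (proj n z (u i))" .
    also have "... = (\<Sum>l\<in>{1..n}. cnj (ip (u i) (z l)) * ip (A (u i)) (z l))"
      unfolding proj_def by (simp add: ip_sum_r)
    also have "... = (\<Sum>l\<in>{1..n}. ip (z l) (u i) * ip (A (u i)) (z l))"
    proof (rule sum.cong[OF refl])
      fix l show "cnj (ip (u i) (z l)) * ip (A (u i)) (z l) = ip (z l) (u i) * ip (A (u i)) (z l)"
        using ip_cnj[of "z l" "u i"] by simp
    qed
    finally show ?thesis .
  qed
  have h2: "ip (A (z l)) (z l) = (\<Sum>i\<in>{1..n}. ip (z l) (u i) * ip (A (u i)) (z l))" if l: "l \<in> {1..n}" for l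
  proof -
    have "z l \<in> span (US n z)" using l by (intro span_base imageI)
    hence zl: "z l \<in> span (US n u)" using sp by simp
    have "z l = proj n u (z l)" using proj_span[OF on zl] by simp
    from arg_cong[OF this, of A]
    have "A (z l) = (\<Sum>i\<in>{1..n}. sm (ip (z l) (u i)) (A (u i)))"
      unfolding proj_def A_lincomb .
    from arg_cong[OF this, of "\<lambda>y. ip y (z l)"]
    show ?thesis by (simp add: ip_sum_l)
  qed
  have "(\<Sum>i\<in>{1..n}. ip (A (u i)) (u i)) = (\<Sum>i\<in>{1..n}. \<Sum>l\<in>{1..n}. ip (z l) (u i) * ip (A (u i)) (z l))"
    by (rule sum.cong[OF refl]) (rule h1)
  also have "... = (\<Sum>l\<in>{1..n}. \<Sum>i\<in>{1..n}. ip (z l) (u i) * ip (A (u i)) (z l))"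
    by (rule sum.swap)
  also have "... = (\<Sum>l\<in>{1..n}. ip (A (z l)) (z l))"
    by (rule sum.cong[OF refl]) (rule h2[symmetric])
  finally have "(\<Sum>i\<in>{1..n}. ip (A (u i)) (u i)) = (\<Sum>l\<in>{1..n}. ip (A (z l)) (z l))" .
  from arg_cong[OF this, of Re] show ?thesis by (simp add: Re_sum)
qed

lemma L_bdd: "bdd_above {smallest_eigenvalue j (compression ip A v) | v. ON j v}"
proof (cases "j = 0")
  case True
  have "{smallest_eigenvalue j (compression ip A v) | v. ON j v} \<subseteq> {Min {}}"
    using True by (auto simp: smallest_eigenvalue_def mat_eigenvalue_def)
  thus ?thesis by (meson bdd_above_empty bdd_above_insert bdd_above_mono)
next
  case False
  obtain K where K: "K \<ge> 0" "\<forall>x. \<bar>R x\<bar> \<le> K * n2 x" using R_bound by blast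
  show ?thesis
  proof (rule bdd_aboveI[of _ K])
    fix y assume "y \<in> {smallest_eigenvalue j (compression ip A v) | v. ON j v}"
    then obtain v where v: "ON j v" "y = smallest_eigenvalue j (compression ip A v)" by blast
    have one: "1 \<in> {1..j}" using False by simp
    have v1: "v 1 \<in> span (US j v)" using one by (intro span_base imageI)
    have n1: "n2 (v 1) = 1" using ON_ip[OF v(1) one one] unfolding n2_def by simp
    have "y = Min (Re ` E (span (US j v)))" using v smallest_eig by simp
    also have "... \<le> R (v 1)" using rayleigh[OF v(1) _ v1] False n1 by simp
    also have "... \<le> K" using K(2)[rule_format, of "v 1"] n1 by simp
    finally show "y \<le> K" .
  qed
qed

lemma kyfan_up: "ON k u \<Longrightarrow> (\<Sum>i\<in>{1..k}. R (u i)) \<le> (\<Sum>j\<in>{1..k}. lambda_k ip A j)"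
proof (induction k arbitrary: u)
  case 0 show ?case by simp
next
  case (Suc k)
  let ?U = "span (US (Suc k) u)"
  have fin: "finite (Re ` E ?U)" using E_finite[OF Suc.prems] by simp
  have ne: "Re ` E ?U \<noteq> {}" using E_nonempty[OF Suc.prems] by simp
  obtain \<mu> where mu: "\<mu> \<in> E ?U" "Re \<mu> = Min (Re ` E ?U)" using Min_in[OF fin ne] by force
  obtain t where t: "ON (Suc k) t" "span (US (Suc k) t) = ?U" "ip (A (t 1)) (t 1) = \<mu>"
    using peel[OF Suc.prems mu(1)] by blast
  have "(\<Sum>i\<in>{1..Suc k}. R (u i)) = (\<Sum>i\<in>{1..Suc k}. R (t i))"
    by (rule TI[OF Suc.prems t(1) t(2)[symmetric]])
  also have "... = R (t 1) + (\<Sum>i\<in>{1..k}. R (t (Suc i)))" by (rule sum_first)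
  also have "R (t 1) = Re \<mu>" using t(3) by simp
  also have "Re \<mu> \<le> lambda_k ip A (Suc k)"
  proof -
    have "Re \<mu> = smallest_eigenvalue (Suc k) (compression ip A u)" using mu(2) smallest_eig[OF Suc.prems] by simp
    also have "... \<le> lambda_k ip A (Suc k)" unfolding lambda_k_def
      by (rule cSup_upper[OF _ L_bdd]) (use Suc.prems in blast)
    finally show ?thesis .
  qed
  also have "(\<Sum>i\<in>{1..k}. R (t (Suc i))) \<le> (\<Sum>j\<in>{1..k}. lambda_k ip A j)"
    by (rule Suc.IH[OF ON_shift[OF t(1)]])
  finally show ?case by (simp add: add.commute)
qed

lemma hnorm1: "hnorm ip x = 1 \<longleftrightarrow> n2 x = 1"
  by (simp add: hnorm_n2)

lemma S_bdd: "bdd_above {R x | x. x \<in> span (US k v) \<and> hnorm ip x = 1}"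
proof -
  obtain K where K: "K \<ge> 0" "\<forall>x. \<bar>R x\<bar> \<le> K * n2 x" using R_bound by blast
  show ?thesis
  proof (rule bdd_aboveI[of _ K])
    fix y assume "y \<in> {R x | x. x \<in> span (US k v) \<and> hnorm ip x = 1}"
    then obtain x where x: "y = R x" "n2 x = 1" using hnorm1 by blast
    show "y \<le> K" using K(2)[rule_format, of x] x by simp
  qed
qed

lemma ON_li: "ON k u \<Longrightarrow> lin_indep_tuple sm k u"
  unfolding lin_indep_tuple_def
proof (intro allI impI ballI)
  fix a j assume on: "ON k u" and s: "(\<Sum>j\<in>{1..k}. sm (a j) (u j)) = 0" and j: "j \<in> {1..k}"
  have "a j = ip (\<Sum>j\<in>{1..k}. sm (a j) (u j)) (u j)" by (rule coef[OF on j, symmetric])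
  thus "a j = 0" using s by simp
qed

lemma li_nonzero: "lin_indep_tuple sm k v \<Longrightarrow> 0 < k \<Longrightarrow> v 1 \<noteq> 0"
proof
  assume li: "lin_indep_tuple sm k v" and k: "0 < k" and v1: "v 1 = 0"
  define a where "a = (\<lambda>j::nat. if j = 1 then (1::complex) else 0)"
  have "(\<Sum>j\<in>{1..k}. sm (a j) (v j)) = (\<Sum>j\<in>{1..k}. if j = 1 then v j else 0)"
    by (rule sum.cong) (auto simp: a_def)
  also have "... = v 1" using k by (simp add: sum.delta')
  finally have "(\<Sum>j\<in>{1..k}. sm (a j) (v j)) = 0" using v1 by simp
  hence "a 1 = 0" using li k unfolding lin_indep_tuple_def by auto
  thus False by (simp add: a_def)
qed

lemma S_ne: "lin_indep_tuple sm k v \<Longrightarrow> 0 < k \<Longrightarrow> {R x | x. x \<in> span (US k v) \<and> hnorm ip x = 1} \<noteq> {}"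
proof -
  assume li: "lin_indep_tuple sm k v" and k: "0 < k"
  have v1: "v 1 \<noteq> 0" by (rule li_nonzero[OF li k])
  have "normalize (v 1) \<in> span (US k v)" unfolding normalize_def
    using k by (intro span_sm span_base) auto
  moreover have "hnorm ip (normalize (v 1)) = 1" using n2_normalize[OF v1] hnorm1 by simp
  ultimately show ?thesis by blast
qed

lemma N_bdd: "0 < k \<Longrightarrow> bdd_below {Sup {R x | x. x \<in> span (US k v) \<and> hnorm ip x = 1} | v. lin_indep_tuple sm k v}"
proof -
  assume k: "0 < k"
  obtain K where K: "K \<ge> 0" "\<forall>x. \<bar>R x\<bar> \<le> K * n2 x" using R_bound by blast
  show ?thesis
  proof (rule bdd_belowI[of _ "-K"])
    fix y assume "y \<in> {Sup {R x | x. x \<in> span (US k v) \<and> hnorm ip x = 1} | v. lin_indep_tuple sm k v}"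
    then obtain v where v: "lin_indep_tuple sm k v" "y = Sup {R x | x. x \<in> span (US k v) \<and> hnorm ip x = 1}" by blast
    obtain r where r: "r \<in> {R x | x. x \<in> span (US k v) \<and> hnorm ip x = 1}" using S_ne[OF v(1) k] by blast
    then obtain x where x: "r = R x" "n2 x = 1" using hnorm1 by blast
    have "-K \<le> r" using K(2)[rule_format, of x] x by simp
    also have "r \<le> y" unfolding v(2) by (rule cSup_upper[OF r S_bdd])
    finally show "-K \<le> y" .
  qed
qed

lemma kyfan_low: "ON k u \<Longrightarrow> (\<Sum>j\<in>{1..k}. nu_k sm ip A j) \<le> (\<Sum>i\<in>{1..k}. R (u i))"
proof (induction k arbitrary: u)
  case 0 show ?case by simp
next
  case (Suc k)
  let ?U = "span (US (Suc k) u)"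
  have fin: "finite (Re ` E ?U)" using E_finite[OF Suc.prems] by simp
  have ne: "Re ` E ?U \<noteq> {}" using E_nonempty[OF Suc.prems] by simp
  obtain \<mu> where mu: "\<mu> \<in> E ?U" "Re \<mu> = Max (Re ` E ?U)" using Max_in[OF fin ne] by force
  obtain t where t: "ON (Suc k) t" "span (US (Suc k) t) = ?U" "ip (A (t 1)) (t 1) = \<mu>"
    using peel[OF Suc.prems mu(1)] by blast
  have "nu_k sm ip A (Suc k) \<le> Re \<mu>"
  proof -
    have "nu_k sm ip A (Suc k) \<le> Sup {R x | x. x \<in> ?U \<and> hnorm ip x = 1}"
      unfolding nu_k_def
      by (rule cInf_lower[OF _ N_bdd]) (use ON_li[OF Suc.prems] in auto)
    also have "... \<le> Re \<mu>"
    proof (rule cSup_least)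
      show "{R x | x. x \<in> ?U \<and> hnorm ip x = 1} \<noteq> {}" by (rule S_ne[OF ON_li[OF Suc.prems]]) simp
    next
      fix y assume "y \<in> {R x | x. x \<in> ?U \<and> hnorm ip x = 1}"
      then obtain x where x: "y = R x" "x \<in> ?U" "n2 x = 1" using hnorm1 by blast
      show "y \<le> Re \<mu>" using rayleigh[OF Suc.prems _ x(2)] x mu(2) by simp
    qed
    finally show ?thesis .
  qed
  have "(\<Sum>j\<in>{1..Suc k}. nu_k sm ip A j) = (\<Sum>j\<in>{1..k}. nu_k sm ip A j) + nu_k sm ip A (Suc k)"
    by (rule sum_last)
  also have "... \<le> (\<Sum>i\<in>{1..k}. R (t (Suc i))) + Re \<mu>"
    by (rule add_mono[OF Suc.IH[OF ON_shift[OF t(1)]] \<open>nu_k sm ip A (Suc k) \<le> Re \<mu>\<close>])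
  also have "... = R (t 1) + (\<Sum>i\<in>{1..k}. R (t (Suc i)))" using t(3) by simp
  also have "... = (\<Sum>i\<in>{1..Suc k}. R (t i))" by (rule sum_first[symmetric])
  also have "... = (\<Sum>i\<in>{1..Suc k}. R (u i))"
    by (rule TI[OF t(1) Suc.prems]) (use t(2) in simp)
  finally show ?case .
qed

lemma combo_nonzero:
  assumes on: "ON n v" and a: "\<exists>i\<in>{1..n}. a i \<noteq> 0"
  shows "(\<Sum>i\<in>{1..n}. sm (a i) (v i)) \<noteq> 0"
proof -
  obtain i where i: "i \<in> {1..n}" "a i \<noteq> 0" using a by blast
  have "n2 (\<Sum>i\<in>{1..n}. sm (a i) (v i)) = (\<Sum>j\<in>{1..n}. (cmod (a j))^2)" by (rule n2_lincomb[OF on])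
  also have "... > 0" by (rule sum_pos2[OF _ i(1)]) (use i in auto)
  finally show ?thesis by (metis less_irrefl n2_eq0_iff)
qed

lemma attain_up:
  assumes inf: "infinite_dimensional sm" and eps: "0 < \<epsilon>"
  shows "\<exists>u. ON m u \<and> (\<forall>k\<in>{1..m}. lambda_k ip A k - \<epsilon> \<le> R (u k))"
proof (induction m)
  case 0 show ?case by (auto simp: orthonormal_on_def)
next
  case (Suc m)
  then obtain u where u: "ON m u" "\<forall>k\<in>{1..m}. lambda_k ip A k - \<epsilon> \<le> R (u k)" by blast
  let ?L = "{smallest_eigenvalue (Suc m) (compression ip A v) | v. ON (Suc m) v}"
  have Lne: "?L \<noteq> {}" using ON_exists[OF inf, of "Suc m"] by blast
  have "lambda_k ip A (Suc m) - \<epsilon> < Sup ?L" unfolding lambda_k_def using eps by simp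
  then obtain y where "y \<in> ?L" "lambda_k ip A (Suc m) - \<epsilon> < y"
    using less_cSup_iff[OF Lne L_bdd] by blast
  then obtain v where v: "ON (Suc m) v" "lambda_k ip A (Suc m) - \<epsilon> < smallest_eigenvalue (Suc m) (compression ip A v)"
    by blast
  have "m < card {1..Suc m}" by simp
  from lin_sys[OF _ this, of "\<lambda>l i. ip (v i) (u l)"] obtain a where
    a: "\<exists>i\<in>{1..Suc m}. a i \<noteq> 0" "\<forall>l\<in>{1..m}. (\<Sum>i\<in>{1..Suc m}. ip (v i) (u l) * a i) = 0" by auto
  define x where "x = (\<Sum>i\<in>{1..Suc m}. sm (a i) (v i))"
  have x0: "x \<noteq> 0" unfolding x_def by (rule combo_nonzero[OF v(1) a(1)])
  have xs: "x \<in> span (US (Suc m) v)" unfolding x_def by (rule span_lincomb) (auto intro: span_base)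
  have xp: "ip x (u l) = 0" if "l \<in> {1..m}" for l
  proof -
    have "ip x (u l) = (\<Sum>i\<in>{1..Suc m}. ip (v i) (u l) * a i)"
      unfolding x_def ip_sum_l by (intro sum.cong refl) (simp add: mult.commute)
    also have "... = 0" using a(2) that by blast
    finally show ?thesis .
  qed
  define e where "e = normalize x"
  have ee: "ip e e = 1" unfolding e_def by (rule ip_normalize_self[OF x0])
  have ep: "ip e (u l) = 0" if "l \<in> {1..m}" for l using xp[OF that] by (simp add: e_def normalize_def)
  have es: "e \<in> span (US (Suc m) v)" unfolding e_def normalize_def by (rule span_sm[OF xs])
  have n1: "n2 e = 1" unfolding e_def by (rule n2_normalize[OF x0])
  have "smallest_eigenvalue (Suc m) (compression ip A v) \<le> R e"
    using rayleigh[OF v(1) _ es] smallest_eig[OF v(1)] n1 by simp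
  hence Re: "lambda_k ip A (Suc m) - \<epsilon> \<le> R e" using v(2) by simp
  have on': "ON (Suc m) (u(Suc m := e))" by (rule ON_upd[OF u(1) ee ep])
  have "\<forall>k\<in>{1..Suc m}. lambda_k ip A k - \<epsilon> \<le> R ((u(Suc m := e)) k)"
  proof
    fix k assume k: "k \<in> {1..Suc m}"
    show "lambda_k ip A k - \<epsilon> \<le> R ((u(Suc m := e)) k)"
    proof (cases "k = Suc m")
      case True thus ?thesis using Re by simp
    next
      case False
      hence "k \<in> {1..m}" using k by auto
      thus ?thesis using u(2) False by simp
    qed
  qed
  thus ?case using on' by blast
qed

lemma attain_down:
  assumes inf: "infinite_dimensional sm" and eps: "0 < \<epsilon>"
  shows "\<exists>u. ON m u \<and> (\<forall>k\<in>{1..m}. R (u k) \<le> nu_k sm ip A k + \<epsilon>)"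
proof (induction m)
  case 0 show ?case by (auto simp: orthonormal_on_def)
next
  case (Suc m)
  then obtain u where u: "ON m u" "\<forall>k\<in>{1..m}. R (u k) \<le> nu_k sm ip A k + \<epsilon>" by blast
  let ?N = "{Sup {R x | x. x \<in> span (US (Suc m) v) \<and> hnorm ip x = 1} | v. lin_indep_tuple sm (Suc m) v}"
  have Nne: "?N \<noteq> {}" using ON_exists[OF inf, of "Suc m"] ON_li by blast
  have "Inf ?N < nu_k sm ip A (Suc m) + \<epsilon>" unfolding nu_k_def using eps by simp
  then obtain y where "y \<in> ?N" "y < nu_k sm ip A (Suc m) + \<epsilon>"
    using cInf_less_iff[OF Nne N_bdd] by blast
  then obtain v where v: "lin_indep_tuple sm (Suc m) v"
    "Sup {R x | x. x \<in> span (US (Suc m) v) \<and> hnorm ip x = 1} < nu_k sm ip A (Suc m) + \<epsilon>"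
    by blast
  have "m < card {1..Suc m}" by simp
  from lin_sys[OF _ this, of "\<lambda>l i. ip (v i) (u l)"] obtain a where
    a: "\<exists>i\<in>{1..Suc m}. a i \<noteq> 0" "\<forall>l\<in>{1..m}. (\<Sum>i\<in>{1..Suc m}. ip (v i) (u l) * a i) = 0" by auto
  define x where "x = (\<Sum>i\<in>{1..Suc m}. sm (a i) (v i))"
  have x0: "x \<noteq> 0" using v(1) a(1) unfolding x_def lin_indep_tuple_def by blast
  have xs: "x \<in> span (US (Suc m) v)" unfolding x_def by (rule span_lincomb) (auto intro: span_base)
  have xp: "ip x (u l) = 0" if "l \<in> {1..m}" for l
  proof -
    have "ip x (u l) = (\<Sum>i\<in>{1..Suc m}. ip (v i) (u l) * a i)"
      unfolding x_def ip_sum_l by (intro sum.cong refl) (simp add: mult.commute)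
    also have "... = 0" using a(2) that by blast
    finally show ?thesis .
  qed
  define e where "e = normalize x"
  have ee: "ip e e = 1" unfolding e_def by (rule ip_normalize_self[OF x0])
  have ep: "ip e (u l) = 0" if "l \<in> {1..m}" for l using xp[OF that] by (simp add: e_def normalize_def)
  have es: "e \<in> span (US (Suc m) v)" unfolding e_def normalize_def by (rule span_sm[OF xs])
  have n1: "hnorm ip e = 1" unfolding e_def using n2_normalize[OF x0] hnorm1 by simp
  have "R e \<le> Sup {R x | x. x \<in> span (US (Suc m) v) \<and> hnorm ip x = 1}"
    by (rule cSup_upper[OF _ S_bdd]) (use es n1 in blast)
  hence Re: "R e \<le> nu_k sm ip A (Suc m) + \<epsilon>" using v(2) by simp
  have on': "ON (Suc m) (u(Suc m := e))" by (rule ON_upd[OF u(1) ee ep])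
  have "\<forall>k\<in>{1..Suc m}. R ((u(Suc m := e)) k) \<le> nu_k sm ip A k + \<epsilon>"
  proof
    fix k assume k: "k \<in> {1..Suc m}"
    show "R ((u(Suc m := e)) k) \<le> nu_k sm ip A k + \<epsilon>"
    proof (cases "k = Suc m")
      case True thus ?thesis using Re by simp
    next
      case False
      hence "k \<in> {1..m}" using k by auto
      thus ?thesis using u(2) False by simp
    qed
  qed
  thus ?case using on' by blast
qed

end

context hs
begin

lemma gs_step':
  assumes on: "ON n v" and x: "x \<notin> span (US n v)"
  shows "ON (Suc n) (v(Suc n := normalize (x - proj n v x)))
         \<and> x \<in> span (US (Suc n) (v(Suc n := normalize (x - proj n v x))))"
proof -
  define z where "z = x - proj n v x"
  define e where "e = normalize z"
  have z0: "z \<noteq> 0" using x proj_in_span[of n v x] unfolding z_def by auto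
  have ee: "ip e e = 1" unfolding e_def by (rule ip_normalize_self[OF z0])
  have pe: "ip e (v i) = 0" if "i \<in> {1..n}" for i
    unfolding e_def normalize_def z_def using perp_proj[OF on that] by simp
  have "x \<in> span (insert e (US n v))"
  proof -
    have "x = proj n v x + sm (of_real (sqrt (n2 z))) e" using normalize_inv[OF z0] unfolding z_def e_def by simp
    moreover have "proj n v x \<in> span (insert e (US n v))"
      using proj_in_span[of n v x] span_mono[of "US n v" "insert e (US n v)"] by blast
    moreover have "sm (of_real (sqrt (n2 z))) e \<in> span (insert e (US n v))" by (auto intro: span_sm span_base)
    ultimately show ?thesis by (metis span_add)
  qed
  thus ?thesis using ON_upd[OF on ee pe] unfolding US_upd e_def z_def by simp
qed

lemma onb_ext:
  assumes inf: "infinite_dimensional sm" and sep: "hilbert_separable ip" and on: "ON m u"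
  shows "\<exists>e. onb ip e \<and> (\<forall>i\<in>{1..m}. e i = u i)"
proof -
  obtain D where D: "countable D" "\<forall>x. \<forall>\<epsilon>>0. \<exists>d\<in>D. hnorm ip (x - d) < \<epsilon>"
    using sep unfolding hilbert_separable_def by blast
  have Dne: "D \<noteq> {}" using D(2)[rule_format, where x=0 and \<epsilon>=1] by auto
  define d where "d = from_nat_into D"
  have dens: "\<exists>k. n2 (x - d k) < \<epsilon>" if "\<epsilon> > 0" for x \<epsilon>
  proof -
    have "0 < sqrt \<epsilon>" using that by simp
    then obtain y where y: "y \<in> D" "hnorm ip (x - y) < sqrt \<epsilon>" using D(2)[rule_format, where x=x and \<epsilon>="sqrt \<epsilon>"] by blast
    obtain k where "y = d k" using y(1) range_from_nat_into[OF Dne D(1)] unfolding d_def by blast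
    moreover have "n2 (x - y) < \<epsilon>" using y(2) unfolding hnorm_n2 by simp
    ultimately show ?thesis by blast
  qed
  have notall: "\<exists>k. d k \<notin> span (US n v)" if onv: "ON n v" for n v
  proof (rule ccontr)
    assume "\<not> (\<exists>k. d k \<notin> span (US n v))"
    hence all: "\<forall>k. d k \<in> span (US n v)" by blast
    have "x \<in> span (US n v)" for x
    proof -
      have "n2 (x - proj n v x) < \<epsilon>" if eps: "\<epsilon> > 0" for \<epsilon>
      proof -
        obtain k where "n2 (x - d k) < \<epsilon>" using dens[OF eps] by blast
        moreover have "n2 (x - proj n v x) \<le> n2 (x - d k)" by (rule proj_best[OF onv all[rule_format]])
        ultimately show ?thesis by linarith
      qed
      hence "n2 (x - proj n v x) \<le> 0" by (metis less_irrefl not_le)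
      hence "x - proj n v x = 0" using n2_nonneg[of "x - proj n v x"] n2_eq0_iff by (metis antisym)
      hence "x = proj n v x" by simp
      thus ?thesis using proj_in_span by metis
    qed
    moreover have "span (US n v) \<noteq> UNIV" using inf unfolding infinite_dimensional_def by blast
    ultimately show False by blast
  qed
  define nxt where "nxt = (\<lambda>n v. let x = d (LEAST k. d k \<notin> span (US n v)) in v(Suc n := normalize (x - proj n v x)))"
  define G where "G = rec_nat u (\<lambda>j v. nxt (m + j) v)"
  have G0: "G 0 = u" unfolding G_def by simp
  have GS: "G (Suc j) = nxt (m + j) (G j)" for j unfolding G_def by simp
  define L where "L = (\<lambda>j. LEAST k. d k \<notin> span (US (m + j) (G j)))"
  have Gs: "G (Suc j) = (G j)(Suc (m + j) := normalize (d (L j) - proj (m + j) (G j) (d (L j))))" for j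
    unfolding GS nxt_def L_def Let_def by (rule refl)
  have inv: "ON (m + j) (G j)" for j
  proof (induction j)
    case 0 thus ?case using on G0 by simp
  next
    case (Suc j)
    have nin: "d (L j) \<notin> span (US (m + j) (G j))" unfolding L_def
      using notall[OF Suc.IH] by (rule LeastI_ex)
    show ?case unfolding Gs add_Suc_right by (rule conjunct1[OF gs_step'[OF Suc.IH nin]])
  qed
  have Lout: "d (L j) \<notin> span (US (m + j) (G j))" for j
    unfolding L_def using notall[OF inv[of j]] by (rule LeastI_ex)
  have Lin: "d (L j) \<in> span (US (m + Suc j) (G (Suc j)))" for j
    unfolding Gs add_Suc_right by (rule conjunct2[OF gs_step'[OF inv[of j] Lout[of j]]])
  have stab1: "G (Suc j) i = G j i" if "i \<le> m + j" for i j
    using that unfolding Gs by simp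
  have stab: "G (j + p) i = G j i" if "i \<le> m + j" for i j p
  proof (induction p)
    case 0 show ?case by simp
  next
    case (Suc p)
    have "G (Suc (j + p)) i = G (j + p) i" by (rule stab1) (use that in simp)
    thus ?case using Suc.IH by simp
  qed
  define e where "e = (\<lambda>i. G i i)"
  have eG: "e i = G j i" if "i \<le> m + j" for i j
  proof (cases "i \<le> j")
    case True
    have "G (i + (j - i)) i = G i i" by (rule stab) simp
    thus ?thesis using True unfolding e_def by simp
  next
    case False
    have "G (j + (i - j)) i = G j i" by (rule stab[OF that])
    thus ?thesis using False unfolding e_def by simp
  qed
  have USe: "US (m + j) (G j) = US (m + j) e" for j
    using eG[of _ j] by (auto simp: image_def)
  have mono_span: "span (US (m + j) e) \<subseteq> span (US (m + j') e)" if "j \<le> j'" for j j'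
    by (rule span_mono) (use that in auto)
  have orth: "orthonormal_on ip {1..} e"
    unfolding orthonormal_on_def
  proof (intro ballI)
    fix i j :: nat assume i: "i \<in> {1..}" and j: "j \<in> {1..}"
    define J where "J = max i j"
    have "i \<in> {1..m + J}" "j \<in> {1..m + J}" using i j unfolding J_def by auto
    moreover have "e i = G J i" "e j = G J j" by (rule eG, simp add: J_def)+
    ultimately show "ip (e i) (e j) = (if i = j then 1 else 0)" using ON_ip[OF inv[of J]] by simp
  qed
  have allin: "\<exists>j. d k \<in> span (US (m + j) e)" for k
  proof (rule ccontr)
    assume "\<not> (\<exists>j. d k \<in> span (US (m + j) e))"
    hence nk: "d k \<notin> span (US (m + j) (G j))" for j using USe by simp
    have Lk: "L j \<le> k" for j unfolding L_def by (rule Least_le) (rule nk)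
    have "inj L"
    proof (rule injI)
      fix j j' assume eq: "L j = L j'"
      show "j = j'"
      proof (rule ccontr)
        assume "j \<noteq> j'"
        then consider "j < j'" | "j' < j" by linarith
        thus False
        proof cases
          case 1
          have "d (L j) \<in> span (US (m + Suc j) e)" using Lin[of j] USe[of "Suc j"] by metis
          hence "d (L j) \<in> span (US (m + j') e)" using mono_span[of "Suc j" j'] 1 by auto
          thus False using Lout[of j'] eq USe by simp
        next
          case 2
          have "d (L j') \<in> span (US (m + Suc j') e)" using Lin[of j'] USe[of "Suc j'"] by metis
          hence "d (L j') \<in> span (US (m + j) e)" using mono_span[of "Suc j'" j] 2 by auto
          thus False using Lout[of j] eq USe by simp
        qed
      qed
    qed
    moreover have "range L \<subseteq> {..k}" using Lk by auto
    ultimately have "finite (UNIV :: nat set)"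
      using finite_subset[OF _ finite_atMost] finite_imageD by metis
    thus False by simp
  qed
  have maxl: "x = 0" if x: "\<forall>j\<ge>1. ip x (e j) = 0" for x
  proof -
    have "n2 x < \<epsilon>" if eps: "\<epsilon> > 0" for \<epsilon>
    proof -
      obtain k where k: "n2 (x - d k) < \<epsilon>" using dens[OF eps] by blast
      obtain j where j: "d k \<in> span (US (m + j) e)" using allin by blast
      have "ip x (d k) = 0" by (rule perp_span_gen[OF _ j]) (use x in auto)
      hence "ip x (- d k) = 0" by (simp add: ip_minus_r)
      hence "n2 (x + - d k) = n2 x + n2 (- d k)" by (rule pythag)
      hence "n2 x \<le> n2 (x - d k)" by (metis diff_conv_add_uminus le_add_same_cancel1 n2_nonneg)
      thus ?thesis using k by linarith
    qed
    hence "n2 x \<le> 0" by (metis less_irrefl not_le)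
    thus "x = 0" using n2_nonneg[of x] n2_eq0_iff by (metis antisym)
  qed
  have "onb ip e" unfolding onb_def using orth maxl by blast
  moreover have "\<forall>i\<in>{1..m}. e i = u i" using eG[of _ 0] G0 by auto
  ultimately show ?thesis by blast
qed

lemma third:
  assumes inf: "infinite_dimensional sm" and ou: "ON m u" and ow: "ON m w"
  shows "\<exists>z. ON m z \<and> (\<forall>i\<in>{1..m}. \<forall>j\<in>{1..m}. ip (u i) (z j) = 0 \<and> ip (w i) (z j) = 0)"
proof -
  have on0: "ON 0 u" by (auto simp: orthonormal_on_def)
  from gs_ext[OF _ on0, of "US m u \<union> US m w"] obtain n b where
    b: "ON n b" "span (US n b) = span (US 0 u \<union> (US m u \<union> US m w))" by auto
  from ON_exists_ext[OF inf b(1), of m] obtain b' where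
    b': "ON (n + m) b'" "\<forall>i\<in>{1..n}. b' i = b i" by blast
  have USb: "US n b' = US n b" using b'(2) by (auto simp: image_def)
  define z where "z = (\<lambda>j. b' (n + j))"
  have onz: "ON m z" unfolding orthonormal_on_def z_def
  proof (intro ballI)
    fix i j assume "i \<in> {1..m}" "j \<in> {1..m}"
    hence "n + i \<in> {1..n+m}" "n + j \<in> {1..n+m}" by auto
    thus "ip (b' (n + i)) (b' (n + j)) = (if i = j then 1 else 0)" using ON_ip[OF b'(1)] by simp
  qed
  have pz: "ip y (z j) = 0" if y: "y \<in> span (US n b)" and j: "j \<in> {1..m}" for y j
  proof (rule perp_span_gen'[OF _ y[folded USb]])
    fix s assume "s \<in> US n b'"
    then obtain l where l: "l \<in> {1..n}" "s = b' l" by blast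
    have "n + j \<in> {1..n+m}" "l \<in> {1..n+m}" "n + j \<noteq> l" using l j by auto
    thus "ip (z j) s = 0" using ON_ip[OF b'(1)] l unfolding z_def by simp
  qed
  have "\<forall>i\<in>{1..m}. \<forall>j\<in>{1..m}. ip (u i) (z j) = 0 \<and> ip (w i) (z j) = 0"
  proof (intro ballI conjI)
    fix i j assume i: "i \<in> {1..m}" and j: "j \<in> {1..m}"
    have "u i \<in> span (US n b)" "w i \<in> span (US n b)" unfolding b(2) using i by (auto intro: span_base)
    thus "ip (u i) (z j) = 0" "ip (w i) (z j) = 0" using pz j by auto
  qed
  thus ?thesis using onz by blast
qed

end

context hsA
begin

definition val :: "(nat \<Rightarrow> real) \<Rightarrow> nat \<Rightarrow> (nat \<Rightarrow> 'a) \<Rightarrow> real" where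
  "val c m u = (\<Sum>j\<in>{1..m}. c j * R (u j))"

lemma path:
  assumes ou: "ON m u" and oz: "ON m z" and p: "\<forall>i\<in>{1..m}. \<forall>j\<in>{1..m}. ip (u i) (z j) = 0"
    and y: "min (val c m u) (val c m z) \<le> y" "y \<le> max (val c m u) (val c m z)"
  shows "\<exists>q. ON m q \<and> val c m q = y"
proof -
  have p': "ip (z i) (u j) = 0" if "i \<in> {1..m}" "j \<in> {1..m}" for i j
    using p that ip_cnj[of "z i" "u j"] by simp
  define q where "q = (\<lambda>\<theta> i. sm (of_real (cos \<theta>)) (u i) + sm (of_real (sin \<theta>)) (z i))"
  define X where "X = (\<lambda>j. Re (ip (A (u j)) (z j)) + Re (ip (A (z j)) (u j)))"
  define g where "g = (\<lambda>\<theta>. \<Sum>j\<in>{1..m}. c j * ((cos \<theta>)^2 * R (u j) + (sin \<theta>)^2 * R (z j) + cos \<theta> * sin \<theta> * X j))"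
  have onq: "ON m (q \<theta>)" for \<theta>
    unfolding orthonormal_on_def
  proof (intro ballI)
    fix i j assume i: "i \<in> {1..m}" and j: "j \<in> {1..m}"
    have "ip (q \<theta> i) (q \<theta> j) = of_real ((cos \<theta>)^2) * ip (u i) (u j) + of_real ((sin \<theta>)^2) * ip (z i) (z j)
        + of_real (cos \<theta> * sin \<theta>) * ip (u i) (z j) + of_real (sin \<theta> * cos \<theta>) * ip (z i) (u j)"
      unfolding q_def by (simp add: ip_add_l ip_add_r power2_eq_square algebra_simps)
    also have "... = (if i = j then 1 else 0)"
    proof -
      have pij: "ip (u i) (z j) = 0" using p i j by blast
      have cs: "complex_of_real ((cos \<theta>)^2) + complex_of_real ((sin \<theta>)^2) = 1"
        by (simp only: of_real_add[symmetric] sin_cos_squared_add2 of_real_1)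
      show ?thesis using ON_ip[OF ou i j] ON_ip[OF oz i j] pij p'[OF i j] cs by (simp del: of_real_power)
    qed
    finally show "ip (q \<theta> i) (q \<theta> j) = (if i = j then 1 else 0)" .
  qed
  have Rq: "R (q \<theta> j) = (cos \<theta>)^2 * R (u j) + (sin \<theta>)^2 * R (z j) + cos \<theta> * sin \<theta> * X j" for \<theta> j
  proof -
    have "ip (A (q \<theta> j)) (q \<theta> j) = of_real ((cos \<theta>)^2) * ip (A (u j)) (u j) + of_real ((sin \<theta>)^2) * ip (A (z j)) (z j)
        + of_real (cos \<theta> * sin \<theta>) * (ip (A (u j)) (z j) + ip (A (z j)) (u j))"
      unfolding q_def by (simp add: A_add A_sm ip_add_l ip_add_r power2_eq_square algebra_simps)
    thus ?thesis unfolding X_def by (simp add: power2_eq_square)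
  qed
  have gq: "val c m (q \<theta>) = g \<theta>" for \<theta> unfolding val_def g_def Rq ..
  have q0: "q 0 = u" unfolding q_def by (auto simp: fun_eq_iff)
  have q1: "q (pi/2) = z" unfolding q_def by (auto simp: fun_eq_iff)
  have cont: "continuous_on {0..pi/2} g" unfolding g_def by (intro continuous_intros)
  have g0: "g 0 = val c m u" using gq[of 0] q0 by simp
  have g1: "g (pi/2) = val c m z" using gq[of "pi/2"] q1 by simp
  have "\<exists>\<theta>. 0 \<le> \<theta> \<and> \<theta> \<le> pi/2 \<and> g \<theta> = y"
  proof (cases "val c m u \<le> val c m z")
    case True
    thus ?thesis using y IVT'[of g 0 y "pi/2"] cont g0 g1 by simp
  next
    case False
    thus ?thesis using y IVT2'[of g "pi/2" y 0] cont g0 g1 by simp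
  qed
  then obtain \<theta> where "g \<theta> = y" by blast
  thus ?thesis using onq[of \<theta>] gq[of \<theta>] by metis
qed

end

lemma abel:
  fixes c a :: "nat \<Rightarrow> real"
  shows "(\<Sum>j\<in>{1..m}. c j * a j) = (\<Sum>k\<in>{1..m}. (c k - c (Suc k)) * (\<Sum>j\<in>{1..k}. a j)) + c (Suc m) * (\<Sum>j\<in>{1..m}. a j)"
proof (induction m)
  case 0 show ?case by simp
next
  case (Suc m)
  show ?case using Suc.IH by (simp add: algebra_simps)
qed

lemma abel_le:
  fixes c a b :: "nat \<Rightarrow> real"
  assumes part: "\<forall>k\<in>{1..m}. (\<Sum>j\<in>{1..k}. a j) \<le> (\<Sum>j\<in>{1..k}. b j)"
    and mono: "\<forall>k\<in>{1..m}. c (Suc k) \<le> c k" and last: "0 \<le> c (Suc m)"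
  shows "(\<Sum>j\<in>{1..m}. c j * a j) \<le> (\<Sum>j\<in>{1..m}. c j * b j)"
proof -
  have "(\<Sum>j\<in>{1..m}. c j * b j) - (\<Sum>j\<in>{1..m}. c j * a j) = (\<Sum>j\<in>{1..m}. c j * (b j - a j))"
    by (simp add: sum_subtractf algebra_simps)
  also have "... = (\<Sum>k\<in>{1..m}. (c k - c (Suc k)) * (\<Sum>j\<in>{1..k}. b j - a j)) + c (Suc m) * (\<Sum>j\<in>{1..m}. b j - a j)"
    by (rule abel)
  also have "... \<ge> 0"
  proof -
    have "0 \<le> (\<Sum>k\<in>{1..m}. (c k - c (Suc k)) * (\<Sum>j\<in>{1..k}. b j - a j))"
    proof (rule sum_nonneg)
      fix k assume k: "k \<in> {1..m}"
      have "0 \<le> c k - c (Suc k)" using mono[rule_format, OF k] by simp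
      moreover have "0 \<le> (\<Sum>j\<in>{1..k}. b j - a j)" using part[rule_format, OF k] by (simp add: sum_subtractf)
      ultimately show "0 \<le> (c k - c (Suc k)) * (\<Sum>j\<in>{1..k}. b j - a j)" by (rule mult_nonneg_nonneg)
    qed
    moreover have "0 \<le> c (Suc m) * (\<Sum>j\<in>{1..m}. b j - a j)"
    proof (cases "m = 0")
      case True thus ?thesis by simp
    next
      case False
      hence "m \<in> {1..m}" by simp
      from part[rule_format, OF this] have "0 \<le> (\<Sum>j\<in>{1..m}. b j - a j)" by (simp add: sum_subtractf)
      thus ?thesis using last by simp
    qed
    ultimately show ?thesis by simp
  qed
  finally show ?thesis by simp
qed

lemma c_struct:
  fixes c :: "nat \<Rightarrow> real"
  assumes mono: "\<forall>j\<ge>1. c (Suc j) \<le> c j" and fin: "finite {j. 1 \<le> j \<and> c j \<noteq> 0}"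
  shows "(\<forall>j\<ge>1. 0 \<le> c j) \<and> (\<exists>m. {j. 1 \<le> j \<and> c j \<noteq> 0} = {1..m})"
proof -
  define S where "S = {j. 1 \<le> j \<and> c j \<noteq> 0}"
  have finS: "finite S" using fin S_def by simp
  have anti: "c j \<le> c i" if "1 \<le> i" "i \<le> j" for i j
    using that(2)
  proof (induction j rule: dec_induct)
    case base show ?case by simp
  next
    case (step n)
    have "c (Suc n) \<le> c n" using mono step(1) that(1) by simp
    thus ?case using step(3) by simp
  qed
  have nn: "0 \<le> c j" if j: "1 \<le> j" for j
  proof -
    define N where "N = Suc (Max (insert j S))"
    have "j \<le> Max (insert j S)" using finS by simp
    hence jN: "j \<le> N" unfolding N_def by simp
    have "N \<notin> S"
    proof
      assume "N \<in> S"
      hence "N \<le> Max (insert j S)" using finS by simp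
      thus False unfolding N_def by simp
    qed
    hence "c N = 0" using j jN unfolding S_def by simp
    moreover have "c N \<le> c j" by (rule anti[OF j jN])
    ultimately show ?thesis by simp
  qed
  have "\<exists>m. S = {1..m}"
  proof (cases "S = {}")
    case True thus ?thesis by (rule_tac x=0 in exI) simp
  next
    case False
    define M where "M = Max S"
    have MS: "M \<in> S" unfolding M_def using finS False by simp
    have "S = {1..M}"
    proof
      show "S \<subseteq> {1..M}" using finS unfolding M_def by (auto simp: S_def)
      show "{1..M} \<subseteq> S"
      proof
        fix i assume i: "i \<in> {1..M}"
        have "c M \<noteq> 0" "1 \<le> M" using MS unfolding S_def by auto
        hence "0 < c M" using nn[of M] by simp
        moreover have "c M \<le> c i" using i by (intro anti) auto
        ultimately show "i \<in> S" using i unfolding S_def by auto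
      qed
    qed
    thus ?thesis by blast
  qed
  thus ?thesis using nn unfolding S_def by blast
qed

lemma between3:
  fixes a b c y :: real
  assumes "min a c \<le> y" "y \<le> max a c"
  shows "(min a b \<le> y \<and> y \<le> max a b) \<or> (min b c \<le> y \<and> y \<le> max b c)"
  using assms unfolding min_def max_def by (auto split: if_splits)

lemma clamp_close:
  fixes lo hi t d :: real
  assumes "lo \<le> hi" "lo < t + d" "t - d < hi" "0 < d"
  shows "lo \<le> max lo (min t hi) \<and> max lo (min t hi) \<le> hi \<and> \<bar>max lo (min t hi) - t\<bar> < d"
  using assms unfolding min_def max_def by (auto split: if_splits)

theorem lemma5p2:
  fixes sm :: "complex \<Rightarrow> 'a::ab_group_add \<Rightarrow> 'a"
    and ip :: "'a \<Rightarrow> 'a \<Rightarrow> complex"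
    and A :: "'a \<Rightarrow> 'a"
    and c :: "nat \<Rightarrow> real"
  assumes H: "separable_inf_dim_hilbert sm ip"
    and A_sa: "self_adjoint_op sm ip A"
    and c_mono: "\<forall>j\<ge>1. c (Suc j) \<le> c j"
    and c_fin: "finite {j. 1 \<le> j \<and> c j \<noteq> 0}"
  shows "closure (c_numerical_range ip c A) =
         complex_of_real ` {(\<Sum>j\<in>{j. 1 \<le> j \<and> c j \<noteq> 0}. c j * nu_k sm ip A j) ..
                            (\<Sum>j\<in>{j. 1 \<le> j \<and> c j \<noteq> 0}. c j * lambda_k ip A j)}"
proof -
  have cis: "complex_inner_space sm ip" and inf: "infinite_dimensional sm" and sep: "hilbert_separable ip"
    using H unfolding separable_inf_dim_hilbert_def by auto
  interpret hsA sm ip A by unfold_locales (rule cis, rule A_sa)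
  obtain m where S: "{j. 1 \<le> j \<and> c j \<noteq> 0} = {1..m}" using c_struct[OF c_mono c_fin] by blast
  have cnn: "\<forall>j\<ge>1. 0 \<le> c j" using c_struct[OF c_mono c_fin] by blast
  have cSm: "c (Suc m) = 0"
  proof (rule ccontr)
    assume "c (Suc m) \<noteq> 0"
    hence "Suc m \<in> {j. 1 \<le> j \<and> c j \<noteq> 0}" by simp
    thus False unfolding S by simp
  qed
  have cmono': "\<forall>k\<in>{1..m}. c (Suc k) \<le> c k" using c_mono by simp
  define \<alpha> where "\<alpha> = (\<Sum>j\<in>{1..m}. c j * nu_k sm ip A j)"
  define \<beta> where "\<beta> = (\<Sum>j\<in>{1..m}. c j * lambda_k ip A j)"
  define Wr where "Wr = {val c m u | u. ON m u}"
  have sumeq: "(\<Sum>j\<in>{1..m}. complex_of_real (c j) * ip (A (e j)) (e j)) = complex_of_real (val c m e)" for e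
  proof -
    have "(\<Sum>j\<in>{1..m}. complex_of_real (c j) * ip (A (e j)) (e j)) = (\<Sum>j\<in>{1..m}. complex_of_real (c j * R (e j)))"
    proof (rule sum.cong[OF refl])
      fix j show "complex_of_real (c j) * ip (A (e j)) (e j) = complex_of_real (c j * R (e j))"
        by (subst ipA_real) simp
    qed
    thus ?thesis unfolding val_def by simp
  qed
  have W: "c_numerical_range ip c A = complex_of_real ` Wr"
  proof
    show "c_numerical_range ip c A \<subseteq> complex_of_real ` Wr"
    proof
      fix y assume "y \<in> c_numerical_range ip c A"
      then obtain e where e: "onb ip e" "y = (\<Sum>j\<in>{j. 1 \<le> j \<and> c j \<noteq> 0}. complex_of_real (c j) * ip (A (e j)) (e j))"
        unfolding c_numerical_range_def by blast
      have "ON m e" using e(1) unfolding onb_def orthonormal_on_def by auto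
      moreover have "y = complex_of_real (val c m e)" using e(2) sumeq unfolding S by simp
      ultimately show "y \<in> complex_of_real ` Wr" unfolding Wr_def by blast
    qed
  next
    show "complex_of_real ` Wr \<subseteq> c_numerical_range ip c A"
    proof
      fix y assume "y \<in> complex_of_real ` Wr"
      then obtain u where u: "ON m u" "y = complex_of_real (val c m u)" unfolding Wr_def by blast
      obtain e where e: "onb ip e" "\<forall>i\<in>{1..m}. e i = u i" using onb_ext[OF inf sep u(1)] by blast
      have "val c m e = val c m u" unfolding val_def using e(2) by simp
      hence "y = (\<Sum>j\<in>{j. 1 \<le> j \<and> c j \<noteq> 0}. complex_of_real (c j) * ip (A (e j)) (e j))"
        using u(2) sumeq unfolding S by simp
      thus "y \<in> c_numerical_range ip c A" unfolding c_numerical_range_def using e(1) by blast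
    qed
  qed
  have Wsub: "Wr \<subseteq> {\<alpha>..\<beta>}"
  proof
    fix y assume "y \<in> Wr"
    then obtain u where u: "ON m u" "y = val c m u" unfolding Wr_def by blast
    have "y \<le> \<beta>" unfolding u(2) val_def \<beta>_def
    proof (rule abel_le[OF _ cmono'])
      show "\<forall>k\<in>{1..m}. (\<Sum>j\<in>{1..k}. R (u j)) \<le> (\<Sum>j\<in>{1..k}. lambda_k ip A j)"
        using kyfan_up ON_mono[OF u(1)] by simp
      show "0 \<le> c (Suc m)" using cSm by simp
    qed
    moreover have "\<alpha> \<le> y" unfolding u(2) val_def \<alpha>_def
    proof (rule abel_le[OF _ cmono'])
      show "\<forall>k\<in>{1..m}. (\<Sum>j\<in>{1..k}. nu_k sm ip A j) \<le> (\<Sum>j\<in>{1..k}. R (u j))"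
        using kyfan_low ON_mono[OF u(1)] by simp
      show "0 \<le> c (Suc m)" using cSm by simp
    qed
    ultimately show "y \<in> {\<alpha>..\<beta>}" by simp
  qed
  have Wsup: "{\<alpha>..\<beta>} \<subseteq> closure Wr"
  proof
    fix t assume t: "t \<in> {\<alpha>..\<beta>}"
    show "t \<in> closure Wr" unfolding closure_approachable
    proof (intro allI impI)
      fix \<delta> :: real assume d: "0 < \<delta>"
      define C where "C = (\<Sum>j\<in>{1..m}. c j)"
      have C0: "0 \<le> C" unfolding C_def using cnn by (intro sum_nonneg) auto
      define \<epsilon> where "\<epsilon> = \<delta> / (2 * (C + 1))"
      have e0: "0 < \<epsilon>" unfolding \<epsilon>_def using d C0 by simp
      have eC: "\<epsilon> * C < \<delta>"
      proof -
        have "\<epsilon> * C \<le> \<epsilon> * (C + 1)" using e0 by simp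
        also have "... = \<delta> / 2"
        proof -
          have "C + 1 > 0" using C0 by simp
          thus ?thesis unfolding \<epsilon>_def by (simp add: field_simps)
        qed
        finally show ?thesis using d by simp
      qed
      obtain uu where uu: "ON m uu" "\<forall>k\<in>{1..m}. lambda_k ip A k - \<epsilon> \<le> R (uu k)"
        using attain_up[OF inf e0] by blast
      obtain ud where ud: "ON m ud" "\<forall>k\<in>{1..m}. R (ud k) \<le> nu_k sm ip A k + \<epsilon>"
        using attain_down[OF inf e0] by blast
      have vu: "\<beta> - \<epsilon> * C \<le> val c m uu"
      proof -
        have "\<beta> - \<epsilon> * C = (\<Sum>j\<in>{1..m}. c j * (lambda_k ip A j - \<epsilon>))"
          unfolding \<beta>_def C_def by (simp add: algebra_simps sum_subtractf sum_distrib_left)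
        also have "... \<le> (\<Sum>j\<in>{1..m}. c j * R (uu j))"
          by (rule sum_mono, rule mult_left_mono) (use uu cnn in auto)
        finally show ?thesis unfolding val_def .
      qed
      have vd: "val c m ud \<le> \<alpha> + \<epsilon> * C"
      proof -
        have "val c m ud = (\<Sum>j\<in>{1..m}. c j * R (ud j))" unfolding val_def ..
        also have "... \<le> (\<Sum>j\<in>{1..m}. c j * (nu_k sm ip A j + \<epsilon>))"
          by (rule sum_mono, rule mult_left_mono) (use ud cnn in auto)
        also have "... = \<alpha> + \<epsilon> * C"
          unfolding \<alpha>_def C_def by (simp add: algebra_simps sum.distrib sum_distrib_left)
        finally show ?thesis .
      qed
      obtain z where z: "ON m z" "\<forall>i\<in>{1..m}. \<forall>j\<in>{1..m}. ip (ud i) (z j) = 0 \<and> ip (uu i) (z j) = 0"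
        using third[OF inf ud(1) uu(1)] by blast
      have inW: "y \<in> Wr" if y: "min (val c m ud) (val c m uu) \<le> y" "y \<le> max (val c m ud) (val c m uu)" for y
      proof -
        from between3[OF y, of "val c m z"]
        consider "min (val c m ud) (val c m z) \<le> y \<and> y \<le> max (val c m ud) (val c m z)"
          | "min (val c m z) (val c m uu) \<le> y \<and> y \<le> max (val c m z) (val c m uu)" by blast
        thus ?thesis
        proof cases
          case 1
          have p: "\<forall>i\<in>{1..m}. \<forall>j\<in>{1..m}. ip (ud i) (z j) = 0" using z(2) by blast
          from path[OF ud(1) z(1) p] 1 obtain q where "ON m q" "val c m q = y" by blast
          thus ?thesis unfolding Wr_def by blast
        next
          case 2
          have p: "\<forall>i\<in>{1..m}. \<forall>j\<in>{1..m}. ip (uu i) (z j) = 0" using z(2) by blast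
          from path[OF uu(1) z(1) p, of c y] 2 obtain q where "ON m q" "val c m q = y"
            by (auto simp: min.commute max.commute)
          thus ?thesis unfolding Wr_def by blast
        qed
      qed
      define lo where "lo = min (val c m ud) (val c m uu)"
      define hi where "hi = max (val c m ud) (val c m uu)"
      have h1: "lo \<le> hi" unfolding lo_def hi_def by simp
      have tt: "\<alpha> \<le> t" "t \<le> \<beta>" using t by auto
      have "lo \<le> val c m ud" unfolding lo_def by simp
      hence h2: "lo < t + \<delta>" using vd eC tt by linarith
      have "val c m uu \<le> hi" unfolding hi_def by simp
      hence h3: "t - \<delta> < hi" using vu eC tt by linarith
      have cl: "lo \<le> max lo (min t hi) \<and> max lo (min t hi) \<le> hi \<and> \<bar>max lo (min t hi) - t\<bar> < \<delta>"
        by (rule clamp_close[OF h1 h2 h3 d])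
      hence "max lo (min t hi) \<in> Wr" using inW unfolding lo_def hi_def by blast
      moreover have "dist (max lo (min t hi)) t < \<delta>" using cl by (simp add: dist_real_def)
      ultimately show "\<exists>y\<in>Wr. dist y t < \<delta>" by blast
    qed
  qed
  have "closure (complex_of_real ` Wr) = complex_of_real ` {\<alpha>..\<beta>}"
  proof
    have cl: "closed (complex_of_real ` {\<alpha>..\<beta>})"
      by (intro compact_imp_closed compact_continuous_image continuous_on_of_real_id compact_Icc)
    show "closure (complex_of_real ` Wr) \<subseteq> complex_of_real ` {\<alpha>..\<beta>}"
      by (rule closure_minimal[OF image_mono[OF Wsub] cl])
    have "complex_of_real ` closure Wr \<subseteq> closure (complex_of_real ` Wr)"
      by (rule image_closure_subset[OF continuous_on_of_real_id closed_closure closure_subset])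
    thus "complex_of_real ` {\<alpha>..\<beta>} \<subseteq> closure (complex_of_real ` Wr)"
      using image_mono[OF Wsup, of complex_of_real] by blast
  qed
  thus ?thesis unfolding W S \<alpha>_def \<beta>_def .
qed

end
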